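(* Let $\mathbf{X}\subseteq\mathbb{R}^d$ and fix a time step $k$. Assume: (i) the posterior multi-target process $\Phi_{k-1}$ is an i.i.d. process with cardinality distribution $\rho_{k-1}$ and spatial (probability) distribution $s_{k-1}$, hence with intensity measure $\mu_{k-1}(\cdot)=\big(\sum_{m\ge 0} m\rho_{k-1}(m)\big)s_{k-1}(\cdot)$; (ii) the predicted process is $\Phi_{k|k-1}=\bigcup_{x\in\Phi_{k-1}}\big(\Phi_{\mathrm{s}}(x)\cup\Phi_{\mathrm{b}}(x)\big)$, where, conditionally on $\Phi_{k-1}$, all the processes $\Phi_{\mathrm{s}}(x),\Phi_{\mathrm{b}}(x)$ ($x\in\Phi_{k-1}$) are mutually independent; equivalently the PGFL of $\Phi_{k|k-1}$ is $G_{k|k-1}(h)=G_{k-1}\big(G_{\mathrm{s}}(h|\cdot)\,G_{\mathrm{b}}(h|\cdot)\big)$; (iii) the survival process $\Phi_{\mathrm{s}}(x)$ is a Bernoulli process with parameter $p_{\mathrm{s},k}(x)$ and spatial distribution given by a Markov kernel $f_{\mathrm{s},k}(\cdot|x)$; (iv) there is no spontaneous birth; (v) the spawning process $\Phi_{\mathrm{b}}(x)$ is a Poisson process with rate $\lambda_{\mathrm{b},k}(x)\ge 0$ and spatial distribution given by a Markov kernel $s_{\mathrm{b},k}(\cdot|x)$. Write $\bar p_{\mathrm{s},k}=1-p_{\mathrm{s},k}$. Then the intensity measure of $\Phi_{k|k-1}$ is $$\mu_{k|k-1}(B)=\int\big[p_{\mathrm{s},k}(x)f_{\mathrm{s},k}(B|x)+\lambda_{\mathrm{b},k}(x)s_{\mathrm{b},k}(B|x)\big]\mu_{k-1}(\mathrm{d}x)$$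 for every Borel $B\subseteq\mathbf{X}$, and its cardinality distribution is, for every $n\ge 0$, $$\rho_{k|k-1}(n)=\sum_{j=0}^{n}B_{n,j}(b_1,\ldots,b_{n})\sum_{m\ge j}\frac{m!}{n!\,(m-j)!}\rho_{k-1}(m)\,b_0^{\,m-j},$$ where $b_0=\int \bar p_{\mathrm{s},k}(x)e^{-\lambda_{\mathrm{b},k}(x)}\,s_{k-1}(\mathrm{d}x)$ and, for $i\ge1$, $$b_i=\int \lambda_{\mathrm{b},k}(x)^{i-1}e^{-\lambda_{\mathrm{b},k}(x)}\big[\bar p_{\mathrm{s},k}(x)\lambda_{\mathrm{b},k}(x)+i\,p_{\mathrm{s},k}(x)\big]s_{k-1}(\mathrm{d}x).$$
   Context: A point process on $\mathbf{X}$ is a random finite collection of points of $\mathbf{X}$ (all point processes here are simple). Its cardinality distribution $\rho(n)$ is the probability that it has exactly $n$ points; its intensity measure is $\mu(B)=\mathbb{E}[\text{number of points in }B]$. Its probability generating functional (PGFL) is $G(h)=\mathbb{E}\big[\prod_{x\in\Phi}h(x)\big]$ for measurable $h:\mathbf{X}\to\mathbb{R}$ with $\|h\|_\infty\le 1$. An i.i.d. process with cardinality distribution $\rho$ and spatial probability distribution $s$ has $n$ points with probability $\rho(n)$, the points being i.i.d. with law $s$ given $n$. A Bernoulli process with parameter $p\in[0,1]$ and spatial distribution $s$ is empty with probability $1-p$ and otherwise consists of a single point with law $s$. A Poisson process with rate $\lambda\ge0$ and spatial distribution $s$ is an i.i.d. process whose cardinality distribution is Poisson with mean $\lambda$; its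 PGFL is $\exp[\lambda(\int h\,\mathrm{d}s-1)]$. The partial Bell polynomial is $$B_{n,j}(x_1,\ldots,x_n)=\sum\frac{n!}{k_1!(1!)^{k_1}k_2!(2!)^{k_2}\cdots k_n!(n!)^{k_n}}x_1^{k_1}\cdots x_n^{k_n},$$ the sum over nonnegative integers $k_1,\ldots,k_n$ with $k_1+2k_2+\cdots+nk_n=n$ and $k_1+\cdots+k_n=j$; by convention $B_{0,0}=1$ and $B_{n,0}=0$ for $n\ge1$. *)

theory Defs
  imports "HOL-Probability.Probability"
begin

text \<open>Finite point configurations on a measurable space M are represented as finite lists of
points of space M (points counted with multiplicity).  The sigma-algebra on lists is the
finest one making every map (x_0,...,x_{n-1}) to the list [x_0,...,x_{n-1}] measurable
from the n-fold product of M, i.e. the disjoint-union sigma-algebra of the products M^n.\<close>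

definition listM :: "'a measure \<Rightarrow> 'a list measure" where
  "listM M = measure_of (lists (space M))
     {A. A \<subseteq> lists (space M) \<and>
         (\<forall>n. (\<lambda>f. map f [0..<n]) -` A \<inter> space (PiM {..<n} (\<lambda>_. M)) \<in> sets (PiM {..<n} (\<lambda>_. M)))}
     (\<lambda>_. 0)"

definition iid_pp :: "'a measure \<Rightarrow> nat measure \<Rightarrow> 'a measure \<Rightarrow> 'a list measure" where
  "iid_pp M N s = N \<bind> (\<lambda>n. distr (PiM {..<n} (\<lambda>_. s)) (listM M) (\<lambda>f. map f [0..<n]))"

definition poisson_card :: "real \<Rightarrow> nat measure" where
  "poisson_card lam = density (count_space UNIV) (\<lambda>k. ennreal (lam ^ k / fact k * exp (- lam)))"

definition poisson_pp :: "'a measure \<Rightarrow> real \<Rightarrow> 'a measure \<Rightarrow> 'a list measure" where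
  "poisson_pp M lam s = iid_pp M (poisson_card lam) s"

definition bernoulli_pp :: "'a measure \<Rightarrow> real \<Rightarrow> 'a measure \<Rightarrow> 'a list measure" where
  "bernoulli_pp M p s = measure_pmf (bernoulli_pmf p) \<bind>
     (\<lambda>b. if b then distr s (listM M) (\<lambda>y. [y]) else return (listM M) [])"

definition superpose :: "'a measure \<Rightarrow> 'a list measure \<Rightarrow> 'a list measure \<Rightarrow> 'a list measure" where
  "superpose M P Q = distr (P \<Otimes>\<^sub>M Q) (listM M) (\<lambda>(a, b). a @ b)"

definition superpose_list :: "'a measure \<Rightarrow> 'a list measure list \<Rightarrow> 'a list measure" where
  "superpose_list M Ps = foldr (superpose M) Ps (return (listM M) [])"

definition predicted_pp ::
  "'a measure \<Rightarrow> ('a \<Rightarrow> real) \<Rightarrow> ('a \<Rightarrow> 'a measure) \<Rightarrow> ('a \<Rightarrow> real) \<Rightarrow> ('a \<Rightarrow> 'a measure)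
    \<Rightarrow> 'a list measure \<Rightarrow> 'a list measure" where
  "predicted_pp M ps fs lb sb Phi = Phi \<bind>
     (\<lambda>xs. superpose_list M
        (map (\<lambda>x. superpose M (bernoulli_pp M (ps x) (fs x)) (poisson_pp M (lb x) (sb x))) xs))"

definition npoints :: "'a set \<Rightarrow> 'a list \<Rightarrow> nat" where
  "npoints B xs = length (filter (\<lambda>y. y \<in> B) xs)"

definition intensity :: "'a measure \<Rightarrow> 'a list measure \<Rightarrow> 'a measure" where
  "intensity M P = measure_of (space M) (sets M) (\<lambda>B. \<integral>\<^sup>+ xs. of_nat (npoints B xs) \<partial>P)"

definition card_dist :: "'a measure \<Rightarrow> 'a list measure \<Rightarrow> nat \<Rightarrow> real" where
  "card_dist M P n = measure P {xs \<in> lists (space M). length xs = n}"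

text \<open>Partial Bell polynomial B_{n,j}(x_1,...,x_n).  The conventions B_{0,0} = 1 and
B_{n,0} = 0 for n \<ge> 1 follow from the definition.\<close>
definition partial_bell :: "nat \<Rightarrow> nat \<Rightarrow> (nat \<Rightarrow> real) \<Rightarrow> real" where
  "partial_bell n j x =
     (\<Sum>k\<in>{k::nat \<Rightarrow> nat. (\<forall>i. i \<notin> {1..n} \<longrightarrow> k i = 0) \<and>
                         (\<Sum>i=1..n. i * k i) = n \<and> (\<Sum>i=1..n. k i) = j}.
        fact n / (\<Prod>i=1..n. fact (k i) * fact i ^ k i) * (\<Prod>i=1..n. x i ^ k i))"

end

theory Submission
  imports Defs "HOL-Computational_Algebra.Formal_Power_Series"
begin


abbreviation "PiN n M \<equiv> PiM {..<n} (\<lambda>_::nat. M)"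

definition listS :: "'a measure \<Rightarrow> 'a list set set" where
  "listS M = {A. A \<subseteq> lists (space M) \<and>
         (\<forall>n. (\<lambda>f. map f [0..<n]) -` A \<inter> space (PiM {..<n} (\<lambda>_. M)) \<in> sets (PiM {..<n} (\<lambda>_. M)))}"

lemma map_in_lists: "f \<in> space (PiN n M) \<Longrightarrow> map f [0..<n] \<in> lists (space M)"
  by (auto simp: space_PiM PiE_iff)

lemma listS_sigma: "sigma_algebra (lists (space M)) (listS M)"
  unfolding sigma_algebra_iff2
proof (intro conjI ballI allI impI)
  show "listS M \<subseteq> Pow (lists (space M))" by (auto simp: listS_def)
  show "{} \<in> listS M" by (auto simp: listS_def)
next
  fix s assume s: "s \<in> listS M"
  show "lists (space M) - s \<in> listS M"
    unfolding listS_def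
  proof (intro CollectI conjI allI)
    fix n
    have "(\<lambda>f. map f [0..<n]) -` (lists (space M) - s) \<inter> space (PiN n M)
        = space (PiN n M) - ((\<lambda>f. map f [0..<n]) -` s \<inter> space (PiN n M))"
      using map_in_lists[of _ n M] by blast
    then show "(\<lambda>f. map f [0..<n]) -` (lists (space M) - s) \<inter> space (PiN n M) \<in> sets (PiN n M)"
      using s unfolding listS_def by auto
  qed auto
next
  fix A :: "nat \<Rightarrow> _" assume A: "range A \<subseteq> listS M"
  show "(\<Union>i. A i) \<in> listS M"
    unfolding listS_def
  proof (intro CollectI conjI allI)
    show "\<Union> (range A) \<subseteq> lists (space M)" using A by (auto simp: listS_def)
    fix n
    have "(\<lambda>f. map f [0..<n]) -` (\<Union>i. A i) \<inter> space (PiN n M)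
        = (\<Union>i. (\<lambda>f. map f [0..<n]) -` A i \<inter> space (PiN n M))" by blast
    moreover have "\<forall>i. (\<lambda>f. map f [0..<n]) -` A i \<inter> space (PiN n M) \<in> sets (PiN n M)"
      using A by (auto simp: listS_def)
    moreover have "(\<Union>i. (\<lambda>f. map f [0..<n]) -` A i \<inter> space (PiN n M)) \<in> sets (PiN n M)"
      using calculation(2) by (intro sets.countable_UN) auto
    ultimately show "(\<lambda>f. map f [0..<n]) -` (\<Union>i. A i) \<inter> space (PiN n M) \<in> sets (PiN n M)"
      by argo
  qed
qed

lemma listM_eq: "listM M = measure_of (lists (space M)) (listS M) (\<lambda>_. 0)"
  unfolding listM_def listS_def ..

lemma space_listM[simp]: "space (listM M) = lists (space M)"
  unfolding listM_eq by (rule space_measure_of) (auto simp: listS_def)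

lemma sets_listM: "sets (listM M) = listS M"
  unfolding listM_eq
  using sigma_algebra.sigma_sets_eq[OF listS_sigma] 
  by (subst sets_measure_of) (auto simp: listS_def)

lemma in_sets_listM: "A \<in> sets (listM M) \<longleftrightarrow> A \<subseteq> lists (space M) \<and>
   (\<forall>n. (\<lambda>f. map f [0..<n]) -` A \<inter> space (PiN n M) \<in> sets (PiN n M))"
  unfolding sets_listM listS_def by simp

lemma measurable_mapn[measurable]: "(\<lambda>f. map f [0..<n]) \<in> PiN n M \<rightarrow>\<^sub>M listM M"
  by (rule measurableI) (auto simp: map_in_lists in_sets_listM)

lemma measurable_from_listM:
  assumes "g \<in> lists (space M) \<rightarrow> space N"
    and "\<And>n. (\<lambda>f. g (map f [0..<n])) \<in> PiN n M \<rightarrow>\<^sub>M N"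
  shows "g \<in> listM M \<rightarrow>\<^sub>M N"
proof (rule measurableI)
  show "x \<in> space (listM M) \<Longrightarrow> g x \<in> space N" for x using assms(1) by auto
  fix A assume A: "A \<in> sets N"
  show "g -` A \<inter> space (listM M) \<in> sets (listM M)"
    unfolding in_sets_listM
  proof (intro conjI allI)
    fix n
    have "(\<lambda>f. map f [0..<n]) -` (g -` A \<inter> space (listM M)) \<inter> space (PiN n M)
        = (\<lambda>f. g (map f [0..<n])) -` A \<inter> space (PiN n M)"
      using map_in_lists[of _ n M] by auto
    then show "(\<lambda>f. map f [0..<n]) -` (g -` A \<inter> space (listM M)) \<inter> space (PiN n M) \<in> sets (PiN n M)"
      using measurable_sets[OF assms(2) A] by simp
  qed auto
qed

definition nthd :: "'a \<Rightarrow> 'a list \<Rightarrow> nat \<Rightarrow> 'a" where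
  "nthd d xs i = (if i < length xs then xs ! i else d)"

lemma measurable_to_listM:
  assumes d: "d \<in> space M"
    and g: "\<And>y. y \<in> space N \<Longrightarrow> g y \<in> lists (space M)"
    and len: "(\<lambda>y. length (g y)) \<in> N \<rightarrow>\<^sub>M count_space UNIV"
    and nth: "\<And>i. (\<lambda>y. nthd d (g y) i) \<in> N \<rightarrow>\<^sub>M M"
  shows "g \<in> N \<rightarrow>\<^sub>M listM M"
proof (rule measurableI)
  show "y \<in> space N \<Longrightarrow> g y \<in> space (listM M)" for y using g by auto
  fix A assume A: "A \<in> sets (listM M)"
  define S where "S n = (\<lambda>f. map f [0..<n]) -` A \<inter> space (PiN n M)" for n
  have S: "S n \<in> sets (PiN n M)" for n using A unfolding S_def in_sets_listM by auto
  have eq: "g -` A \<inter> space N = (\<Union>n. {y\<in>space N. length (g y) = n} \<inter>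
       ((\<lambda>y. restrict (\<lambda>i. nthd d (g y) i) {..<n}) -` S n \<inter> space N))"
  proof (intro set_eqI iffI)
    fix y assume y: "y \<in> g -` A \<inter> space N"
    let ?n = "length (g y)"
    have "map (restrict (\<lambda>i. nthd d (g y) i) {..<?n}) [0..<?n] = g y"
      by (rule nth_equalityI) (auto simp: nthd_def)
    moreover have "restrict (\<lambda>i. nthd d (g y) i) {..<?n} \<in> space (PiN ?n M)"
      using g[of y] y d by (auto simp: space_PiM nthd_def)
    ultimately show "y \<in> (\<Union>n. {y\<in>space N. length (g y) = n} \<inter>
       ((\<lambda>y. restrict (\<lambda>i. nthd d (g y) i) {..<n}) -` S n \<inter> space N))"
      using y by (auto simp: S_def intro!: exI[of _ ?n])
  next
    fix y assume "y \<in> (\<Union>n. {y\<in>space N. length (g y) = n} \<inter>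
       ((\<lambda>y. restrict (\<lambda>i. nthd d (g y) i) {..<n}) -` S n \<inter> space N))"
    then obtain n where n: "y \<in> space N" "length (g y) = n"
       "map (restrict (\<lambda>i. nthd d (g y) i) {..<n}) [0..<n] \<in> A"
      by (auto simp: S_def)
    have "map (restrict (\<lambda>i. nthd d (g y) i) {..<n}) [0..<n] = g y"
      using n(2) by (intro nth_equalityI) (auto simp: nthd_def)
    then show "y \<in> g -` A \<inter> space N" using n by auto
  qed
  have m1: "{y\<in>space N. length (g y) = n} \<in> sets N" for n
    using len by measurable
  have m2: "(\<lambda>y. restrict (\<lambda>i. nthd d (g y) i) {..<n}) \<in> N \<rightarrow>\<^sub>M PiN n M" for n
    by (rule measurable_restrict) (rule nth)
  show "g -` A \<inter> space N \<in> sets N"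
    unfolding eq using m1 measurable_sets[OF m2 S] by auto
qed


lemma measurable_length_listM[measurable]: "length \<in> listM M \<rightarrow>\<^sub>M count_space UNIV"
  by (rule measurable_from_listM) auto

lemma measurable_nthd[measurable]:
  assumes "d \<in> space M" shows "(\<lambda>xs. nthd d xs i) \<in> listM M \<rightarrow>\<^sub>M M"
proof (rule measurable_from_listM)
  show "(\<lambda>xs. nthd d xs i) \<in> lists (space M) \<rightarrow> space M"
    using assms by (auto simp: nthd_def)
  fix n
  have "(\<lambda>f. nthd d (map f [0..<n]) i) = (\<lambda>f. if i < n then f i else d)"
    by (auto simp: nthd_def)
  moreover have "(\<lambda>f. if i < n then f i else d) \<in> PiN n M \<rightarrow>\<^sub>M M"
    using assms by (cases "i < n") auto
  ultimately show "(\<lambda>f. nthd d (map f [0..<n]) i) \<in> PiN n M \<rightarrow>\<^sub>M M" by simp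
qed

lemma measurable_append_listM[measurable]:
  assumes "space M \<noteq> {}"
  shows "(\<lambda>(a, b). a @ b) \<in> listM M \<Otimes>\<^sub>M listM M \<rightarrow>\<^sub>M listM M"
proof -
  obtain d where d: "d \<in> space M" using assms by auto
  show ?thesis
  proof (rule measurable_to_listM[OF d])
    show "y \<in> space (listM M \<Otimes>\<^sub>M listM M) \<Longrightarrow> (case y of (a, b) \<Rightarrow> a @ b) \<in> lists (space M)" for y
      by (auto simp: space_pair_measure)
    have "(\<lambda>y. length (fst y) + length (snd y)) \<in> listM M \<Otimes>\<^sub>M listM M \<rightarrow>\<^sub>M count_space UNIV"
      by measurable
    then show "(\<lambda>y. length (case y of (a, b) \<Rightarrow> a @ b)) \<in> listM M \<Otimes>\<^sub>M listM M \<rightarrow>\<^sub>M count_space UNIV"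
      by (simp add: case_prod_beta)
    fix i
    have eq: "(\<lambda>y. nthd d (case y of (a, b) \<Rightarrow> a @ b) i) =
       (\<lambda>y. if i < length (fst y) then nthd d (fst y) i else nthd d (snd y) (i - length (fst y)))"
      by (auto simp: nthd_def nth_append fun_eq_iff)
    have m: "(\<lambda>y. nthd d (snd y) (j - length (fst y))) \<in> listM M \<Otimes>\<^sub>M listM M \<rightarrow>\<^sub>M M" for j
    proof -
      have "(\<lambda>y. (\<lambda>k y. nthd d (snd y) (j - k)) (length (fst y)) y) \<in> listM M \<Otimes>\<^sub>M listM M \<rightarrow>\<^sub>M M"
        by (rule measurable_compose_countable) (use d in measurable)
      then show ?thesis by simp
    qed
    show "(\<lambda>y. nthd d (case y of (a, b) \<Rightarrow> a @ b) i) \<in> listM M \<Otimes>\<^sub>M listM M \<rightarrow>\<^sub>M M"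
      unfolding eq
      by (rule measurable_If[OF _ m]) (use d in measurable)
  qed
qed

lemma measurable_singleton_listM[measurable]:
  "(\<lambda>y. [y]) \<in> M \<rightarrow>\<^sub>M listM M"
proof (cases "space M = {}")
  case True then show ?thesis by (intro measurableI) auto
next
  case False
  then obtain d where d: "d \<in> space M" by auto
  show ?thesis
  proof (rule measurable_to_listM[OF d])
    fix i
    have "(\<lambda>y. nthd d [y] i) = (\<lambda>y. if i = 0 then y else d)" by (auto simp: nthd_def)
    then show "(\<lambda>y. nthd d [y] i) \<in> M \<rightarrow>\<^sub>M M" using d by (cases "i = 0") auto
  qed auto
qed

lemma measurable_npoints[measurable]:
  assumes "B \<in> sets M"
  shows "(\<lambda>xs. ennreal (of_nat (npoints B xs))) \<in> borel_measurable (listM M)"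
proof (rule measurable_from_listM)
  fix n
  have "(\<lambda>f. ennreal (of_nat (npoints B (map f [0..<n])))) = (\<lambda>f. \<Sum>i<n. indicator B (f i))"
  proof
    fix f :: "nat \<Rightarrow> _"
    show "ennreal (of_nat (npoints B (map f [0..<n]))) = (\<Sum>i<n. indicator B (f i))"
      unfolding npoints_def
      by (induction n) (auto simp: indicator_def)
  qed
  then show "(\<lambda>f. ennreal (of_nat (npoints B (map f [0..<n])))) \<in> borel_measurable (PiN n M)"
    using assms by simp
qed auto


fun Lk :: "'a measure \<Rightarrow> nat \<Rightarrow> 'a measure \<Rightarrow> 'a list measure" where
  "Lk M 0 s = return (listM M) []"
| "Lk M (Suc n) s = distr (s \<Otimes>\<^sub>M Lk M n s) (listM M) (\<lambda>(y, xs). xs @ [y])"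

lemma sets_Lk[simp]: "sets (Lk M n s) = sets (listM M)"
  by (cases n) auto

lemma space_Lk[simp]: "space (Lk M n s) = lists (space M)"
  using sets_eq_imp_space_eq[OF sets_Lk] by simp

lemma measurable_snoc[measurable]:
  assumes "space M \<noteq> {}"
  shows "(\<lambda>(y, xs). xs @ [y]) \<in> M \<Otimes>\<^sub>M listM M \<rightarrow>\<^sub>M listM M"
proof -
  have "(\<lambda>p. (snd p, [fst p])) \<in> M \<Otimes>\<^sub>M listM M \<rightarrow>\<^sub>M listM M \<Otimes>\<^sub>M listM M" by measurable
  from measurable_comp[OF this measurable_append_listM[OF assms]] show ?thesis
    by (simp add: comp_def case_prod_beta)
qed

lemma prob_space_Lk:
  assumes "prob_space s" "sets s = sets M"
  shows "prob_space (Lk M n s)"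
proof (induction n)
  case 0
  have "space M \<noteq> {}" using assms prob_space.not_empty sets_eq_imp_space_eq by metis
  then show ?case by (auto intro!: prob_space_return)
next
  case (Suc n)
  have ne: "space M \<noteq> {}" using assms prob_space.not_empty sets_eq_imp_space_eq by metis
  have "prob_space (s \<Otimes>\<^sub>M Lk M n s)" by (rule prob_space_pair) (use assms Suc in auto)
  moreover have "(\<lambda>(y, xs). xs @ [y]) \<in> s \<Otimes>\<^sub>M Lk M n s \<rightarrow>\<^sub>M listM M"
    using measurable_snoc[OF ne] assms by (simp cong: measurable_cong_sets)
  ultimately show ?case by (auto intro: prob_space.prob_space_distr)
qed

lemma Lk_eq:
  assumes s: "prob_space s" "sets s = sets M"
  shows "distr (PiN n s) (listM M) (\<lambda>f. map f [0..<n]) = Lk M n s"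
proof (induction n)
  case 0
  interpret prob_space "PiN 0 s" using s by (intro prob_space_PiM) auto
  show ?case using distr_const[of "[]" "listM M"] by simp
next
  case (Suc n)
  have ne: "space M \<noteq> {}" using s prob_space.not_empty sets_eq_imp_space_eq by metis
  have setsPi: "sets (PiN m s) = sets (PiN m M)" for m using s by (intro sets_PiM_cong) auto
  interpret S: prob_space s by (rule s)
  interpret P: prob_space "PiN n s" using s by (intro prob_space_PiM) auto
  have ins: "insert n {..<n} = {..<Suc n}" by auto
  have pi: "distr (s \<Otimes>\<^sub>M PiN n s) (PiN (Suc n) s) (\<lambda>(x, X). X(n := x)) = PiN (Suc n) s"
    using distr_pair_PiM_eq_PiM[where I="{..<n}" and i'=n and M="\<lambda>_. s"] s unfolding ins by auto
  have mupd: "(\<lambda>(x, X). X(n := x)) \<in> s \<Otimes>\<^sub>M PiN n s \<rightarrow>\<^sub>M PiN (Suc n) s"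
  proof (rule measurable_PiM_single')
    fix i assume i: "i \<in> {..<Suc n}"
    show "(\<lambda>\<omega>. (case \<omega> of (x, X) \<Rightarrow> X(n := x)) i) \<in> s \<Otimes>\<^sub>M PiN n s \<rightarrow>\<^sub>M s"
    proof (cases "i = n")
      case True then show ?thesis by (simp add: case_prod_beta)
    next
      case False
      then have "i \<in> {..<n}" using i by auto
      then have "(\<lambda>\<omega>. snd \<omega> i) \<in> s \<Otimes>\<^sub>M PiN n s \<rightarrow>\<^sub>M s" by measurable
      then show ?thesis using False by (simp add: case_prod_beta)
    qed
  next
    show "(\<lambda>\<omega>. case \<omega> of (x, X) \<Rightarrow> X(n := x)) \<in> space (s \<Otimes>\<^sub>M PiN n s) \<rightarrow> {..<Suc n} \<rightarrow>\<^sub>E space s"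
    proof
      fix \<omega> assume "\<omega> \<in> space (s \<Otimes>\<^sub>M PiN n s)"
      then obtain x X where o: "\<omega> = (x, X)" "x \<in> space s" "X \<in> PiE {..<n} (\<lambda>_. space s)"
        by (cases \<omega>) (simp add: space_pair_measure space_PiM)
      have "X(n := x) \<in> PiE (insert n {..<n}) (\<lambda>_. space s)"
        by (rule PiE_fun_upd) (use o in auto)
      then show "(case \<omega> of (x, X) \<Rightarrow> X(n := x)) \<in> {..<Suc n} \<rightarrow>\<^sub>E space s"
        using o unfolding ins by simp
    qed
  qed
  have mmap: "(\<lambda>f. map f [0..<m]) \<in> PiN m s \<rightarrow>\<^sub>M listM M" for m
    using measurable_mapn[of m M] setsPi[of m] by (simp cong: measurable_cong_sets)
  have "distr (PiN (Suc n) s) (listM M) (\<lambda>f. map f [0..<Suc n])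
      = distr (s \<Otimes>\<^sub>M PiN n s) (listM M) ((\<lambda>f. map f [0..<Suc n]) \<circ> (\<lambda>(x, X). X(n := x)))"
    by (subst pi[symmetric], rule distr_distr[OF mmap mupd])
  also have "(\<lambda>f. map f [0..<Suc n]) \<circ> (\<lambda>(x, X). X(n := x)) = (\<lambda>(y, xs). xs @ [y]) \<circ> (\<lambda>(x, X). (x, map X [0..<n]))"
    by (auto simp: fun_eq_iff)
  also have "distr (s \<Otimes>\<^sub>M PiN n s) (listM M) \<dots> =
     distr (distr (s \<Otimes>\<^sub>M PiN n s) (s \<Otimes>\<^sub>M listM M) (\<lambda>(x, X). (x, map X [0..<n]))) (listM M) (\<lambda>(y, xs). xs @ [y])"
  proof (rule distr_distr[symmetric])
    show "(\<lambda>(y, xs). xs @ [y]) \<in> s \<Otimes>\<^sub>M listM M \<rightarrow>\<^sub>M listM M"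
      using measurable_snoc[OF ne] s by (simp cong: measurable_cong_sets)
    show "(\<lambda>(x, X). (x, map X [0..<n])) \<in> s \<Otimes>\<^sub>M PiN n s \<rightarrow>\<^sub>M s \<Otimes>\<^sub>M listM M"
      using mmap[of n] by measurable
  qed
  also have "distr (s \<Otimes>\<^sub>M PiN n s) (s \<Otimes>\<^sub>M listM M) (\<lambda>(x, X). (x, map X [0..<n])) =
        distr s s (\<lambda>x. x) \<Otimes>\<^sub>M distr (PiN n s) (listM M) (\<lambda>f. map f [0..<n])"
  proof (rule pair_measure_distr[symmetric])
    show "sigma_finite_measure (distr (PiN n s) (listM M) (\<lambda>f. map f [0..<n]))"
      using P.prob_space_distr[OF mmap[of n]] by (simp add: prob_space_imp_sigma_finite)
  qed (use mmap in auto)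
  also have "\<dots> = s \<Otimes>\<^sub>M Lk M n s" using Suc by simp
  finally show ?case by simp
qed

lemma measurable_Lk_kernel:
  assumes K: "K \<in> N \<rightarrow>\<^sub>M prob_algebra M" and ne: "space M \<noteq> {}"
  shows "(\<lambda>x. Lk M n (K x)) \<in> N \<rightarrow>\<^sub>M prob_algebra (listM M)"
proof (induction n)
  case 0
  have "return (listM M) [] \<in> space (prob_algebra (listM M))"
    by (auto simp: space_prob_algebra intro!: prob_space_return)
  then show ?case by simp
next
  case (Suc n)
  have "(\<lambda>x. K x \<Otimes>\<^sub>M Lk M n (K x)) \<in> N \<rightarrow>\<^sub>M prob_algebra (M \<Otimes>\<^sub>M listM M)"
    by (rule measurable_pair_prob[OF K Suc.IH])
  then have "(\<lambda>x. distr (K x \<Otimes>\<^sub>M Lk M n (K x)) (listM M) (\<lambda>(y, xs). xs @ [y])) \<in> N \<rightarrow>\<^sub>M prob_algebra (listM M)"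
    by (rule measurable_distr_prob_space2) (use measurable_snoc[OF ne] in measurable)
  then show ?case by simp
qed


lemma measurable_prob_algebra_emeasure:
  assumes "\<And>x. x \<in> space N \<Longrightarrow> prob_space (K x)"
    and "\<And>x. x \<in> space N \<Longrightarrow> sets (K x) = sets L"
    and "\<And>A. A \<in> sets L \<Longrightarrow> (\<lambda>x. emeasure (K x) A) \<in> borel_measurable N"
  shows "K \<in> N \<rightarrow>\<^sub>M prob_algebra L"
proof (rule measurable_prob_algebra_generated[where \<Omega>="space L" and G="sets L"])
  show "sets L = sigma_sets (space L) (sets L)" by (simp add: sets.sigma_sets_eq)
  show "Int_stable (sets L)" by (auto simp: Int_stable_def)
  show "sets L \<subseteq> Pow (space L)" using sets.space_closed by auto
qed (use assms in auto)

definition poi :: "real \<Rightarrow> nat \<Rightarrow> real" where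
  "poi lam k = lam ^ k / fact k * exp (- lam)"

lemma poi_nonneg: "0 \<le> lam \<Longrightarrow> 0 \<le> poi lam k"
  by (simp add: poi_def)

lemma poi_sums: "poi lam sums 1"
proof -
  have "(\<lambda>k. lam ^ k / fact k) sums exp lam"
    using exp_converges[of lam] by (simp add: real_scaleR_def divide_inverse_commute)
  from sums_mult2[OF this, of "exp (- lam)"] show ?thesis
    by (simp add: exp_minus_inverse poi_def[abs_def] mult.commute mult.left_commute times_divide_eq_left)
qed

lemma poi_mean_sums: "(\<lambda>k. real k * poi lam k) sums lam"
proof -
  have "(\<lambda>k. lam * poi lam k) sums lam" using sums_mult[OF poi_sums, of lam] by simp
  moreover have "lam * poi lam k = real (Suc k) * poi lam (Suc k)" for k
    unfolding poi_def fact_Suc power_Suc of_nat_mult by (simp add: divide_simps)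
  ultimately have "(\<lambda>k. real (Suc k) * poi lam (Suc k)) sums lam" by simp
  then show ?thesis by (subst (asm) sums_Suc_iff) simp
qed

lemma poisson_card_poi: "poisson_card lam = density (count_space UNIV) (\<lambda>k. ennreal (poi lam k))"
  unfolding poisson_card_def poi_def ..

lemma sets_poisson_card[simp]: "sets (poisson_card lam) = UNIV"
  by (simp add: poisson_card_def)

lemma space_poisson_card[simp]: "space (poisson_card lam) = UNIV"
  by (simp add: poisson_card_def)

lemma nn_integral_poisson_card:
  "(\<integral>\<^sup>+k. f k \<partial>poisson_card lam) = (\<Sum>k. ennreal (poi lam k) * f k)"
  unfolding poisson_card_poi
  by (subst nn_integral_density) (auto simp: nn_integral_count_space_nat)

lemma emeasure_poisson_card:
  "emeasure (poisson_card lam) A = (\<Sum>k. ennreal (poi lam k) * indicator A k)"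
  using nn_integral_poisson_card[where f="indicator A" and lam=lam] by simp

lemma prob_space_poisson_card:
  assumes "0 \<le> lam" shows "prob_space (poisson_card lam)"
proof
  have "emeasure (poisson_card lam) UNIV = (\<Sum>k. ennreal (poi lam k))"
    by (simp add: emeasure_poisson_card)
  also have "\<dots> = ennreal 1"
    using poi_sums[of lam] poi_nonneg[OF assms] by (subst suminf_ennreal2) (auto simp: sums_iff)
  finally show "emeasure (poisson_card lam) (space (poisson_card lam)) = 1" by simp
qed

lemma measurable_poisson_card:
  assumes l: "l \<in> borel_measurable N" and nn: "\<And>x. x \<in> space N \<Longrightarrow> 0 \<le> l x"
  shows "(\<lambda>x. poisson_card (l x)) \<in> N \<rightarrow>\<^sub>M prob_algebra (count_space UNIV)"
proof (rule measurable_prob_algebra_emeasure)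
  fix A :: "nat set"
  show "(\<lambda>x. emeasure (poisson_card (l x)) A) \<in> borel_measurable N"
    unfolding emeasure_poisson_card poi_def using l by measurable
qed (use nn prob_space_poisson_card in auto)

lemma bern_kernel_meas:
  assumes "S \<in> space (prob_algebra M)"
  shows "(\<lambda>b. if b then distr S (listM M) (\<lambda>y. [y]) else return (listM M) [])
           \<in> measure_pmf (bernoulli_pmf p) \<rightarrow>\<^sub>M prob_algebra (listM M)"
proof -
  have S: "prob_space S" "sets S = sets M" using assms by (auto simp: space_prob_algebra prob_space_measure_pmf)
  have ms: "(\<lambda>y. [y]) \<in> S \<rightarrow>\<^sub>M listM M"
    using measurable_singleton_listM S(2) by (simp cong: measurable_cong_sets)
  have "distr S (listM M) (\<lambda>y. [y]) \<in> space (prob_algebra (listM M))"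
    using S ms by (auto simp: space_prob_algebra intro!: prob_space.prob_space_distr)
  moreover have "return (listM M) [] \<in> space (prob_algebra (listM M))"
    by (auto simp: space_prob_algebra intro!: prob_space_return)
  ultimately show ?thesis by auto
qed

lemma emeasure_bernoulli_pp:
  assumes S: "S \<in> space (prob_algebra M)" and p: "0 \<le> p" "p \<le> 1" and A: "A \<in> sets (listM M)"
  shows "emeasure (bernoulli_pp M p S) A =
     ennreal p * emeasure S ((\<lambda>y. [y]) -` A \<inter> space M) + ennreal (1 - p) * indicator A []"
proof -
  have S': "prob_space S" "sets S = sets M" using S by (auto simp: space_prob_algebra prob_space_measure_pmf)
  have ms: "(\<lambda>y. [y]) \<in> S \<rightarrow>\<^sub>M listM M"
    using measurable_singleton_listM S'(2) by (simp cong: measurable_cong_sets)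
  have "emeasure (bernoulli_pp M p S) A = (\<integral>\<^sup>+b. emeasure (if b then distr S (listM M) (\<lambda>y. [y]) else return (listM M) []) A \<partial>measure_pmf (bernoulli_pmf p))"
    unfolding bernoulli_pp_def
    by (rule emeasure_bind_prob_algebra[OF _ bern_kernel_meas[OF S] A])
       (auto simp: space_prob_algebra prob_space_measure_pmf)
  also have "\<dots> = emeasure (distr S (listM M) (\<lambda>y. [y])) A * p + emeasure (return (listM M) []) A * (1 - p)"
    using p by (subst nn_integral_bernoulli_pmf) auto
  also have "\<dots> = ennreal p * emeasure S ((\<lambda>y. [y]) -` A \<inter> space M) + ennreal (1 - p) * indicator A []"
    using A ms sets_eq_imp_space_eq[OF S'(2)] by (simp add: emeasure_distr mult.commute)
  finally show ?thesis .
qed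

lemma prob_space_bernoulli_pp:
  assumes S: "S \<in> space (prob_algebra M)"
  shows "prob_space (bernoulli_pp M p S)"
  unfolding bernoulli_pp_def
  by (rule prob_space_bind'[OF _ bern_kernel_meas[OF S]]) (auto simp: space_prob_algebra prob_space_measure_pmf)

lemma sets_bernoulli_pp[simp]: "sets (bernoulli_pp M p S) = sets (listM M)"
  unfolding bernoulli_pp_def
  by (subst sets_bind) auto

lemma measurable_bernoulli_pp:
  assumes pm: "p \<in> borel_measurable N" and pr: "\<And>x. x \<in> space N \<Longrightarrow> 0 \<le> p x \<and> p x \<le> 1"
    and S: "S \<in> N \<rightarrow>\<^sub>M prob_algebra M"
  shows "(\<lambda>x. bernoulli_pp M (p x) (S x)) \<in> N \<rightarrow>\<^sub>M prob_algebra (listM M)"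
proof (rule measurable_prob_algebra_emeasure)
  fix x assume x: "x \<in> space N"
  show "prob_space (bernoulli_pp M (p x) (S x))"
    by (rule prob_space_bernoulli_pp) (use measurable_space[OF S x] in auto)
  show "sets (bernoulli_pp M (p x) (S x)) = sets (listM M)" by simp
next
  fix A assume A: "A \<in> sets (listM M)"
  have pre: "(\<lambda>y. [y]) -` A \<inter> space M \<in> sets M"
    using measurable_sets[OF measurable_singleton_listM A] .
  have "(\<lambda>x. ennreal (p x) * emeasure (S x) ((\<lambda>y. [y]) -` A \<inter> space M) + ennreal (1 - p x) * indicator A [])
      \<in> borel_measurable N"
    using pm pre measurable_emeasure_kernel[OF measurable_prob_algebraD[OF S] pre] by measurable
  then show "(\<lambda>x. emeasure (bernoulli_pp M (p x) (S x)) A) \<in> borel_measurable N"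
    by (rule measurable_cong[THEN iffD1, rotated])
       (use pr measurable_space[OF S] A in \<open>auto simp: emeasure_bernoulli_pp\<close>)
qed


lemma poisson_pp_Lk:
  assumes S: "S \<in> space (prob_algebra M)"
  shows "poisson_pp M lam S = poisson_card lam \<bind> (\<lambda>n. Lk M n S)"
  unfolding poisson_pp_def iid_pp_def
  by (rule bind_cong[OF refl], rule Lk_eq) (use S in \<open>auto simp: space_prob_algebra\<close>)

lemma Lk_in_space:
  assumes S: "S \<in> space (prob_algebra M)"
  shows "Lk M n S \<in> space (prob_algebra (listM M))"
  using prob_space_Lk[of S M n] S by (auto simp: space_prob_algebra)

lemma measurable_poisson_pp:
  assumes l: "l \<in> borel_measurable N" and nn: "\<And>x. x \<in> space N \<Longrightarrow> 0 \<le> l x"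
    and S: "S \<in> N \<rightarrow>\<^sub>M prob_algebra M" and ne: "space M \<noteq> {}"
  shows "(\<lambda>x. poisson_pp M (l x) (S x)) \<in> N \<rightarrow>\<^sub>M prob_algebra (listM M)"
proof -
  have k: "(\<lambda>(x, n). Lk M n (S x)) \<in> N \<Otimes>\<^sub>M count_space UNIV \<rightarrow>\<^sub>M prob_algebra (listM M)"
  proof -
    have "(\<lambda>y. (\<lambda>i y. Lk M i (S (fst y))) (snd y) y) \<in> N \<Otimes>\<^sub>M count_space UNIV \<rightarrow>\<^sub>M prob_algebra (listM M)"
    proof (rule measurable_compose_countable)
      fix i
      show "(\<lambda>y. Lk M i (S (fst y))) \<in> N \<Otimes>\<^sub>M count_space UNIV \<rightarrow>\<^sub>M prob_algebra (listM M)"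
        using measurable_comp[OF measurable_fst measurable_Lk_kernel[OF S ne, of i]]
        by (simp add: comp_def)
    qed measurable
    then show ?thesis by (simp add: case_prod_beta)
  qed
  have "(\<lambda>x. poisson_card (l x) \<bind> (\<lambda>n. Lk M n (S x))) \<in> N \<rightarrow>\<^sub>M prob_algebra (listM M)"
    by (rule measurable_bind_prob_space2[OF measurable_poisson_card[OF l nn] k])
  then show ?thesis
    by (rule measurable_cong[THEN iffD1, rotated])
       (use measurable_space[OF S] in \<open>auto simp: poisson_pp_Lk\<close>)
qed

lemma prob_space_poisson_pp:
  assumes S: "S \<in> space (prob_algebra M)" and "0 \<le> lam"
  shows "prob_space (poisson_pp M lam S)"
  unfolding poisson_pp_Lk[OF S]
proof (rule prob_space_bind')
  show "poisson_card lam \<in> space (prob_algebra (count_space UNIV))"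
    using prob_space_poisson_card[OF assms(2)] by (simp add: space_prob_algebra)
  show "(\<lambda>n. Lk M n S) \<in> count_space UNIV \<rightarrow>\<^sub>M prob_algebra (listM M)"
    using Lk_in_space[OF S] by auto
qed

lemma sets_poisson_pp[simp]: "sets (poisson_pp M lam S) = sets (listM M)"
  unfolding poisson_pp_def iid_pp_def by (subst sets_bind) auto

lemma measurable_superpose_kernel:
  assumes P: "P \<in> N \<rightarrow>\<^sub>M prob_algebra (listM M)" and Q: "Q \<in> N \<rightarrow>\<^sub>M prob_algebra (listM M)"
    and ne: "space M \<noteq> {}"
  shows "(\<lambda>x. superpose M (P x) (Q x)) \<in> N \<rightarrow>\<^sub>M prob_algebra (listM M)"
  unfolding superpose_def
  using measurable_comp[OF measurable_pair_prob[OF P Q]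
       measurable_distr_prob_space[OF measurable_append_listM[OF ne]]]
  by (simp add: comp_def)

lemma superpose_in_space:
  assumes "P \<in> space (prob_algebra (listM M))" "Q \<in> space (prob_algebra (listM M))" "space M \<noteq> {}"
  shows "superpose M P Q \<in> space (prob_algebra (listM M))"
  using measurable_space[OF measurable_superpose_kernel[of "\<lambda>_. P" "count_space UNIV" M "\<lambda>_. Q"], of undefined] assms
  by auto

lemma superpose_list_in_space:
  assumes "set Ps \<subseteq> space (prob_algebra (listM M))" "space M \<noteq> {}"
  shows "superpose_list M Ps \<in> space (prob_algebra (listM M))"
  using assms unfolding superpose_list_def
proof (induction Ps)
  case Nil then show ?case by (auto simp: space_prob_algebra intro!: prob_space_return)
next
  case (Cons P Ps) then show ?case by (auto intro!: superpose_in_space)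
qed

lemma measurable_superpose_list_kernel:
  assumes K: "K \<in> M \<rightarrow>\<^sub>M prob_algebra (listM M)" and ne: "space M \<noteq> {}"
  shows "(\<lambda>xs. superpose_list M (map K xs)) \<in> listM M \<rightarrow>\<^sub>M prob_algebra (listM M)"
proof (rule measurable_from_listM)
  show "(\<lambda>xs. superpose_list M (map K xs)) \<in> lists (space M) \<rightarrow> space (prob_algebra (listM M))"
    using measurable_space[OF K] ne by (auto intro!: superpose_list_in_space)
  fix n
  have gen: "set is \<subseteq> {..<n} \<Longrightarrow> (\<lambda>f. foldr (superpose M) (map (\<lambda>i. K (f i)) is) (return (listM M) []))
      \<in> PiN n M \<rightarrow>\<^sub>M prob_algebra (listM M)" for "is"
  proof (induction "is")
    case Nil
    have "return (listM M) [] \<in> space (prob_algebra (listM M))"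
      by (auto simp: space_prob_algebra intro!: prob_space_return)
    then show ?case by simp
  next
    case (Cons i "is")
    have "(\<lambda>f. f i) \<in> PiN n M \<rightarrow>\<^sub>M M"
      using Cons.prems by (intro measurable_component_singleton) auto
    from measurable_compose[OF this K]
    have "(\<lambda>f. K (f i)) \<in> PiN n M \<rightarrow>\<^sub>M prob_algebra (listM M)" .
    with Cons show ?case by (auto intro!: measurable_superpose_kernel ne)
  qed
  have "(\<lambda>f. superpose_list M (map K (map f [0..<n]))) = (\<lambda>f. foldr (superpose M) (map (\<lambda>i. K (f i)) [0..<n]) (return (listM M) []))"
    by (simp add: superpose_list_def comp_def)
  with gen[of "[0..<n]"] show "(\<lambda>f. superpose_list M (map K (map f [0..<n]))) \<in> PiN n M \<rightarrow>\<^sub>M prob_algebra (listM M)"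
    by (simp add: atLeast0LessThan)
qed


lemma space_prob_algebraD:
  "P \<in> space (prob_algebra N) \<Longrightarrow> prob_space P \<and> sets P = sets N"
  by (auto simp: space_prob_algebra)

lemma measurable_npoints'[measurable]:
  assumes "B \<in> sets M"
  shows "(\<lambda>xs. (of_nat (npoints B xs) :: ennreal)) \<in> borel_measurable (listM M)"
  using measurable_npoints[OF assms] by (simp add: ennreal_of_nat_eq_real_of_nat)

lemma nn_integral_superpose:
  assumes P: "P \<in> space (prob_algebra (listM M))" and Q: "Q \<in> space (prob_algebra (listM M))"
    and ne: "space M \<noteq> {}" and h: "h \<in> borel_measurable (listM M)"
  shows "(\<integral>\<^sup>+xs. h xs \<partial>superpose M P Q) = (\<integral>\<^sup>+a. \<integral>\<^sup>+b. h (a @ b) \<partial>Q \<partial>P)"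
proof -
  have P': "prob_space P" "sets P = sets (listM M)" and Q': "prob_space Q" "sets Q = sets (listM M)"
    using P Q by (auto simp: space_prob_algebra)
  have sPQ: "sets (P \<Otimes>\<^sub>M Q) = sets (listM M \<Otimes>\<^sub>M listM M)"
    using P' Q' by (intro sets_pair_measure_cong) auto
  have app: "(\<lambda>(a, b). a @ b) \<in> P \<Otimes>\<^sub>M Q \<rightarrow>\<^sub>M listM M"
    using measurable_append_listM[OF ne] sPQ by (simp cong: measurable_cong_sets)
  have hm: "(\<lambda>z. h (case z of (a, b) \<Rightarrow> a @ b)) \<in> borel_measurable (P \<Otimes>\<^sub>M Q)"
    using measurable_compose[OF app h] .
  interpret Qs: sigma_finite_measure Q using Q' by (simp add: prob_space_imp_sigma_finite)
  have "(\<integral>\<^sup>+xs. h xs \<partial>superpose M P Q) = (\<integral>\<^sup>+z. h (case z of (a, b) \<Rightarrow> a @ b) \<partial>(P \<Otimes>\<^sub>M Q))"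
    unfolding superpose_def by (rule nn_integral_distr[OF app]) (use h in \<open>simp cong: measurable_cong_sets\<close>)
  also have "\<dots> = (\<integral>\<^sup>+a. \<integral>\<^sup>+b. h (a @ b) \<partial>Q \<partial>P)"
    using Qs.nn_integral_fst[OF hm] by simp
  finally show ?thesis .
qed

lemma npoints_append: "npoints B (a @ b) = npoints B a + npoints B b"
  by (simp add: npoints_def)

lemma nn_integral_npoints_superpose:
  assumes P: "P \<in> space (prob_algebra (listM M))" and Q: "Q \<in> space (prob_algebra (listM M))"
    and ne: "space M \<noteq> {}" and B: "B \<in> sets M"
  shows "(\<integral>\<^sup>+xs. of_nat (npoints B xs) \<partial>superpose M P Q) =
     (\<integral>\<^sup>+xs. of_nat (npoints B xs) \<partial>P) + (\<integral>\<^sup>+xs. of_nat (npoints B xs) \<partial>Q)"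
proof -
  have P': "prob_space P" "sets P = sets (listM M)" and Q': "prob_space Q" "sets Q = sets (listM M)"
    using P Q by (auto simp: space_prob_algebra)
  have mP: "(\<lambda>xs. (of_nat (npoints B xs) :: ennreal)) \<in> borel_measurable P"
    using measurable_npoints'[OF B] P'(2) by (simp cong: measurable_cong_sets)
  have mQ: "(\<lambda>xs. (of_nat (npoints B xs) :: ennreal)) \<in> borel_measurable Q"
    using measurable_npoints'[OF B] Q'(2) by (simp cong: measurable_cong_sets)
  have "(\<integral>\<^sup>+xs. of_nat (npoints B xs) \<partial>superpose M P Q) =
      (\<integral>\<^sup>+a. \<integral>\<^sup>+b. (of_nat (npoints B a) :: ennreal) + (of_nat (npoints B b) :: ennreal) \<partial>Q \<partial>P)"
    using nn_integral_superpose[OF P Q ne measurable_npoints'[OF B]]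
    by (simp add: npoints_append of_nat_add)
  also have "\<dots> = (\<integral>\<^sup>+a. (of_nat (npoints B a) :: ennreal) + (\<integral>\<^sup>+b. (of_nat (npoints B b) :: ennreal) \<partial>Q) \<partial>P)"
    using mQ prob_space.emeasure_space_1[OF Q'(1)]
    by (intro nn_integral_cong) (simp add: nn_integral_add)
  also have "\<dots> = (\<integral>\<^sup>+xs. of_nat (npoints B xs) \<partial>P) + (\<integral>\<^sup>+xs. of_nat (npoints B xs) \<partial>Q)"
    using mP prob_space.emeasure_space_1[OF P'(1)] by (simp add: nn_integral_add)
  finally show ?thesis by simp
qed

definition el :: "'a measure \<Rightarrow> 'a list measure \<Rightarrow> nat \<Rightarrow> ennreal" where
  "el M P n = emeasure P {xs \<in> lists (space M). length xs = n}"

lemma len_set_sets: "{xs \<in> lists (space M). length xs = n} \<in> sets (listM M)"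
proof -
  have "length -` {n} \<inter> space (listM M) \<in> sets (listM M)"
    by (rule measurable_sets[OF measurable_length_listM]) auto
  moreover have "length -` {n} \<inter> space (listM M) = {xs \<in> lists (space M). length xs = n}" by auto
  ultimately show ?thesis by simp
qed

lemma el_superpose:
  assumes P: "P \<in> space (prob_algebra (listM M))" and Q: "Q \<in> space (prob_algebra (listM M))"
    and ne: "space M \<noteq> {}"
  shows "el M (superpose M P Q) n = (\<Sum>i=0..n. el M P i * el M Q (n - i))"
proof -
  have P': "prob_space P" "sets P = sets (listM M)" and Q': "prob_space Q" "sets Q = sets (listM M)"
    using P Q by (auto simp: space_prob_algebra)
  have spP: "space P = lists (space M)" and spQ: "space Q = lists (space M)"
    using sets_eq_imp_space_eq[OF P'(2)] sets_eq_imp_space_eq[OF Q'(2)] by auto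
  let ?L = "\<lambda>n. {xs \<in> lists (space M). length xs = n}"
  have sup_sets: "sets (superpose M P Q) = sets (listM M)" by (simp add: superpose_def)
  have "el M (superpose M P Q) n = (\<integral>\<^sup>+xs. indicator (?L n) xs \<partial>superpose M P Q)"
    unfolding el_def using len_set_sets[of M n] sup_sets by simp
  also have "\<dots> = (\<integral>\<^sup>+a. \<integral>\<^sup>+b. indicator (?L n) (a @ b) \<partial>Q \<partial>P)"
    by (rule nn_integral_superpose[OF P Q ne]) (use len_set_sets[of M n] in simp)
  also have "\<dots> = (\<integral>\<^sup>+a. (\<Sum>i=0..n. indicator (?L i) a * el M Q (n - i)) \<partial>P)"
  proof (rule nn_integral_cong)
    fix a assume a: "a \<in> space P"
    have "(\<integral>\<^sup>+b. indicator (?L n) (a @ b) \<partial>Q) = (\<integral>\<^sup>+b. (if length a \<le> n then indicator (?L (n - length a)) b else 0) \<partial>Q)"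
      using a by (intro nn_integral_cong) (auto simp: spP spQ indicator_def)
    also have "\<dots> = (if length a \<le> n then el M Q (n - length a) else 0)"
      using len_set_sets[of M "n - length a"] Q'(2) by (simp add: el_def)
    also have "\<dots> = (\<Sum>i=0..n. (if length a = i then el M Q (n - i) else 0))"
      by (simp add: sum.delta')
    also have "\<dots> = (\<Sum>i=0..n. indicator (?L i) a * el M Q (n - i))"
      using a spP by (intro sum.cong) (auto simp: indicator_def)
    finally show "(\<integral>\<^sup>+b. indicator (?L n) (a @ b) \<partial>Q) = (\<Sum>i=0..n. indicator (?L i) a * el M Q (n - i))" .
  qed
  also have "\<dots> = (\<Sum>i=0..n. el M P i * el M Q (n - i))"
    using len_set_sets[of M] P'(2)
    by (subst nn_integral_sum) (auto simp: el_def nn_integral_multc)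
  finally show ?thesis .
qed

definition elf :: "'a measure \<Rightarrow> 'a list measure \<Rightarrow> ennreal fps" where
  "elf M P = Abs_fps (el M P)"

lemma elf_superpose:
  assumes "P \<in> space (prob_algebra (listM M))" "Q \<in> space (prob_algebra (listM M))" "space M \<noteq> {}"
  shows "elf M (superpose M P Q) = elf M P * elf M Q"
  by (rule fps_ext) (simp add: elf_def fps_mult_nth el_superpose[OF assms])

lemma elf_return: "elf M (return (listM M) []) = 1"
  by (rule fps_ext) (auto simp: elf_def el_def len_set_sets emeasure_return indicator_def)

lemma elf_superpose_list:
  assumes "set Ps \<subseteq> space (prob_algebra (listM M))" "space M \<noteq> {}"
  shows "elf M (superpose_list M Ps) = prod_list (map (elf M) Ps)"
  using assms
proof (induction Ps)
  case Nil then show ?case by (simp add: superpose_list_def elf_return)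
next
  case (Cons P Ps)
  have "superpose_list M (P # Ps) = superpose M P (superpose_list M Ps)"
    by (simp add: superpose_list_def)
  then show ?case using Cons superpose_list_in_space[of Ps M]
    by (simp add: elf_superpose)
qed

lemma npoints_superpose_list:
  assumes "set Ps \<subseteq> space (prob_algebra (listM M))" "space M \<noteq> {}" "B \<in> sets M"
  shows "(\<integral>\<^sup>+xs. of_nat (npoints B xs) \<partial>superpose_list M Ps) = (\<Sum>P\<leftarrow>Ps. \<integral>\<^sup>+xs. of_nat (npoints B xs) \<partial>P)"
  using assms
proof (induction Ps)
  case Nil
  have "(\<integral>\<^sup>+xs. (of_nat (npoints B xs) :: ennreal) \<partial>return (listM M) []) = of_nat (npoints B [])"
    by (rule nn_integral_return) (use Nil in auto)
  then show ?case by (simp add: superpose_list_def npoints_def)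
next
  case (Cons P Ps)
  have "superpose_list M (P # Ps) = superpose M P (superpose_list M Ps)"
    by (simp add: superpose_list_def)
  then show ?case using Cons superpose_list_in_space[of Ps M]
    by (simp add: nn_integral_npoints_superpose)
qed


lemma ne_of_prob_algebra: "S \<in> space (prob_algebra M) \<Longrightarrow> space M \<noteq> {}"
proof -
  assume "S \<in> space (prob_algebra M)"
  then have "prob_space S" "sets S = sets M" by (auto simp: space_prob_algebra)
  then show ?thesis using prob_space.not_empty[of S] sets_eq_imp_space_eq[of S M] by simp
qed

lemma nn_integral_Lk_Suc:
  assumes S: "S \<in> space (prob_algebra M)" and h: "h \<in> borel_measurable (listM M)"
  shows "(\<integral>\<^sup>+xs. h xs \<partial>Lk M (Suc k) S) = (\<integral>\<^sup>+y. \<integral>\<^sup>+xs. h (xs @ [y]) \<partial>Lk M k S \<partial>S)"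
proof -
  have S': "prob_space S" "sets S = sets M" using S by (auto simp: space_prob_algebra)
  have ne: "space M \<noteq> {}" by (rule ne_of_prob_algebra[OF S])
  have sp: "sets (S \<Otimes>\<^sub>M Lk M k S) = sets (M \<Otimes>\<^sub>M listM M)"
    using S' by (intro sets_pair_measure_cong) auto
  have sn: "(\<lambda>(y, xs). xs @ [y]) \<in> S \<Otimes>\<^sub>M Lk M k S \<rightarrow>\<^sub>M listM M"
    using measurable_snoc[OF ne] sp by (simp cong: measurable_cong_sets)
  have hm: "(\<lambda>z. h (case z of (y, xs) \<Rightarrow> xs @ [y])) \<in> borel_measurable (S \<Otimes>\<^sub>M Lk M k S)"
    using measurable_compose[OF sn h] .
  interpret L: sigma_finite_measure "Lk M k S"
    using prob_space_Lk[OF S'] by (simp add: prob_space_imp_sigma_finite)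
  have "(\<integral>\<^sup>+xs. h xs \<partial>Lk M (Suc k) S) = (\<integral>\<^sup>+z. h (case z of (y, xs) \<Rightarrow> xs @ [y]) \<partial>(S \<Otimes>\<^sub>M Lk M k S))"
    by simp (rule nn_integral_distr[OF sn], use h in \<open>simp cong: measurable_cong_sets\<close>)
  also have "\<dots> = (\<integral>\<^sup>+y. \<integral>\<^sup>+xs. h (xs @ [y]) \<partial>Lk M k S \<partial>S)"
    using L.nn_integral_fst[OF hm] by simp
  finally show ?thesis .
qed

lemma measurable_sum_list_listM[measurable]:
  assumes g: "g \<in> borel_measurable M"
  shows "(\<lambda>xs. \<Sum>x\<leftarrow>xs. g x :: ennreal) \<in> borel_measurable (listM M)"
proof (rule measurable_from_listM)
  fix n
  have "(\<lambda>f. \<Sum>x\<leftarrow>map f [0..<n]. g x) = (\<lambda>f. \<Sum>i<n. g (f i))"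
    by (auto simp: interv_sum_list_conv_sum_set_nat map_map comp_def atLeast0LessThan)
  moreover have "(\<lambda>f. \<Sum>i<n. g (f i)) \<in> borel_measurable (PiN n M)" using g by measurable
  ultimately show "(\<lambda>f. \<Sum>x\<leftarrow>map f [0..<n]. g x) \<in> borel_measurable (PiN n M)" by simp
qed auto

lemma nn_integral_sum_list_Lk:
  assumes S: "S \<in> space (prob_algebra M)" and g: "g \<in> borel_measurable M"
  shows "(\<integral>\<^sup>+xs. (\<Sum>x\<leftarrow>xs. g x) \<partial>Lk M k S) = of_nat k * (\<integral>\<^sup>+x. g x \<partial>S)"
proof (induction k)
  case 0
  have "(\<integral>\<^sup>+xs. (\<Sum>x\<leftarrow>xs. g x) \<partial>return (listM M) []) = (\<Sum>x\<leftarrow>[]. g x)"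
    by (rule nn_integral_return) (use g in auto)
  then show ?case by simp
next
  case (Suc k)
  have S': "prob_space S" "sets S = sets M" using S by (auto simp: space_prob_algebra)
  have gS: "g \<in> borel_measurable S" using g S'(2) by (simp cong: measurable_cong_sets)
  have mL: "(\<lambda>xs. \<Sum>x\<leftarrow>xs. g x) \<in> borel_measurable (Lk M k S)"
    using measurable_sum_list_listM[OF g] by (simp cong: measurable_cong_sets)
  have "(\<integral>\<^sup>+xs. (\<Sum>x\<leftarrow>xs. g x) \<partial>Lk M (Suc k) S) = (\<integral>\<^sup>+y. \<integral>\<^sup>+xs. (\<Sum>x\<leftarrow>xs. g x) + g y \<partial>Lk M k S \<partial>S)"
    by (subst nn_integral_Lk_Suc[OF S measurable_sum_list_listM[OF g]]) simp
  also have "\<dots> = (\<integral>\<^sup>+y. of_nat k * (\<integral>\<^sup>+x. g x \<partial>S) + g y \<partial>S)"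
    using prob_space.emeasure_space_1[OF prob_space_Lk[OF S', of k]] mL Suc
    by (intro nn_integral_cong) (simp add: nn_integral_add)
  also have "\<dots> = of_nat k * (\<integral>\<^sup>+x. g x \<partial>S) + (\<integral>\<^sup>+x. g x \<partial>S)"
    using prob_space.emeasure_space_1[OF S'(1)] gS by (simp add: nn_integral_add)
  finally show ?case by (simp add: distrib_right)
qed

lemma npoints_sum_list: "(of_nat (npoints B xs) :: ennreal) = (\<Sum>x\<leftarrow>xs. indicator B x)"
  by (induction xs) (auto simp: npoints_def indicator_def)

lemma nn_integral_npoints_Lk:
  assumes S: "S \<in> space (prob_algebra M)" and B: "B \<in> sets M"
  shows "(\<integral>\<^sup>+xs. of_nat (npoints B xs) \<partial>Lk M k S) = of_nat k * emeasure S B"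
proof -
  have "sets S = sets M" using S by (auto simp: space_prob_algebra)
  then show ?thesis
    using nn_integral_sum_list_Lk[OF S, of "indicator B" k] B
    by (simp add: npoints_sum_list)
qed

lemma el_Lk:
  assumes S: "S \<in> space (prob_algebra M)"
  shows "el M (Lk M k S) n = (if n = k then 1 else 0)"
proof -
  have S': "prob_space S" "sets S = sets M" using S by (auto simp: space_prob_algebra)
  interpret P: prob_space "PiN k S" using S' by (intro prob_space_PiM) auto
  have setsPi: "sets (PiN k S) = sets (PiN k M)" using S' by (intro sets_PiM_cong) auto
  have mmap: "(\<lambda>f. map f [0..<k]) \<in> PiN k S \<rightarrow>\<^sub>M listM M"
    using measurable_mapn[of k M] setsPi by (simp cong: measurable_cong_sets)
  have sp: "space (PiN k S) = space (PiN k M)" using sets_eq_imp_space_eq[OF setsPi] .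
  have "el M (Lk M k S) n = emeasure (PiN k S) ((\<lambda>f. map f [0..<k]) -` {xs \<in> lists (space M). length xs = n} \<inter> space (PiN k S))"
    unfolding el_def Lk_eq[OF S', symmetric]
    by (rule emeasure_distr[OF mmap len_set_sets])
  also have "(\<lambda>f. map f [0..<k]) -` {xs \<in> lists (space M). length xs = n} \<inter> space (PiN k S)
      = (if n = k then space (PiN k S) else {})"
    using map_in_lists[of _ k M] sp by auto
  finally show ?thesis using P.emeasure_space_1 by simp
qed


lemma nn_integral_npoints_bern:
  assumes S: "S \<in> space (prob_algebra M)" and p: "0 \<le> p" "p \<le> 1" and B: "B \<in> sets M"
  shows "(\<integral>\<^sup>+xs. of_nat (npoints B xs) \<partial>bernoulli_pp M p S) = ennreal p * emeasure S B"
proof -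
  have S': "prob_space S" "sets S = sets M" using S by (auto simp: space_prob_algebra)
  have ms: "(\<lambda>y. [y]) \<in> S \<rightarrow>\<^sub>M listM M"
    using measurable_singleton_listM S'(2) by (simp cong: measurable_cong_sets)
  have t: "(\<integral>\<^sup>+xs. of_nat (npoints B xs) \<partial>distr S (listM M) (\<lambda>y. [y])) = emeasure S B"
  proof -
    have "(\<integral>\<^sup>+xs. of_nat (npoints B xs) \<partial>distr S (listM M) (\<lambda>y. [y])) = (\<integral>\<^sup>+y. of_nat (npoints B [y]) \<partial>S)"
      by (rule nn_integral_distr[OF ms]) (use measurable_npoints'[OF B] in \<open>simp cong: measurable_cong_sets\<close>)
    also have "\<dots> = (\<integral>\<^sup>+y. indicator B y \<partial>S)"
      by (intro nn_integral_cong) (simp add: npoints_def indicator_def)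
    also have "\<dots> = emeasure S B" using B S'(2) by simp
    finally show ?thesis .
  qed
  have f: "(\<integral>\<^sup>+xs. of_nat (npoints B xs) \<partial>return (listM M) []) = 0"
    by (subst nn_integral_return[OF _ measurable_npoints'[OF B]]) (auto simp: npoints_def)
  have "(\<integral>\<^sup>+xs. of_nat (npoints B xs) \<partial>bernoulli_pp M p S) =
     (\<integral>\<^sup>+b. \<integral>\<^sup>+xs. of_nat (npoints B xs) \<partial>(if b then distr S (listM M) (\<lambda>y. [y]) else return (listM M) []) \<partial>measure_pmf (bernoulli_pmf p))"
    unfolding bernoulli_pp_def
    by (rule nn_integral_bind[OF measurable_npoints'[OF B] measurable_prob_algebraD[OF bern_kernel_meas[OF S]]])
  also have "\<dots> = emeasure S B * p"
    using p by (subst nn_integral_bernoulli_pmf) (auto simp: t f)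
  finally show ?thesis by (simp add: mult.commute)
qed

lemma el_bern:
  assumes S: "S \<in> space (prob_algebra M)" and p: "0 \<le> p" "p \<le> 1"
  shows "el M (bernoulli_pp M p S) n = (if n = 0 then ennreal (1 - p) else if n = 1 then ennreal p else 0)"
proof -
  have S': "prob_space S" "sets S = sets M" using S by (auto simp: space_prob_algebra)
  have spS: "space S = space M" using sets_eq_imp_space_eq[OF S'(2)] .
  have pre: "(\<lambda>y. [y]) -` {xs \<in> lists (space M). length xs = n} \<inter> space M = (if n = 1 then space M else {})"
    by auto
  show ?thesis
    unfolding el_def emeasure_bernoulli_pp[OF S p len_set_sets] pre
    using prob_space.emeasure_space_1[OF S'(1)] spS by (auto simp: indicator_def)
qed

lemma Lk_kernel_count:
  assumes S: "S \<in> space (prob_algebra M)"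
  shows "(\<lambda>n. Lk M n S) \<in> count_space UNIV \<rightarrow>\<^sub>M prob_algebra (listM M)"
  using Lk_in_space[OF S] by auto

lemma nn_integral_npoints_pois:
  assumes S: "S \<in> space (prob_algebra M)" and lam: "0 \<le> lam" and B: "B \<in> sets M"
  shows "(\<integral>\<^sup>+xs. of_nat (npoints B xs) \<partial>poisson_pp M lam S) = ennreal lam * emeasure S B"
proof -
  have "(\<integral>\<^sup>+xs. of_nat (npoints B xs) \<partial>poisson_pp M lam S) =
      (\<integral>\<^sup>+k. \<integral>\<^sup>+xs. of_nat (npoints B xs) \<partial>Lk M k S \<partial>poisson_card lam)"
    unfolding poisson_pp_Lk[OF S]
  proof (rule nn_integral_bind[OF measurable_npoints'[OF B] measurable_prob_algebraD])
    show "(\<lambda>n. Lk M n S) \<in> poisson_card lam \<rightarrow>\<^sub>M prob_algebra (listM M)"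
      using Lk_kernel_count[OF S] measurable_cong_sets[of "poisson_card lam" "count_space UNIV" "prob_algebra (listM M)" "prob_algebra (listM M)"]
      by simp
  qed
  also have "\<dots> = (\<Sum>k. ennreal (poi lam k) * (of_nat k * emeasure S B))"
    by (simp add: nn_integral_npoints_Lk[OF S B] nn_integral_poisson_card)
  also have "\<dots> = (\<Sum>k. ennreal (real k * poi lam k) * emeasure S B)"
    using poi_nonneg[OF lam]
    by (intro suminf_cong) (simp add: ennreal_mult' ennreal_of_nat_eq_real_of_nat mult_ac)
  also have "\<dots> = (\<Sum>k. ennreal (real k * poi lam k)) * emeasure S B"
    by (rule ennreal_suminf_multc)
  also have "(\<Sum>k. ennreal (real k * poi lam k)) = ennreal lam"
    using poi_mean_sums[of lam] poi_nonneg[OF lam]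
    by (subst suminf_ennreal2) (auto simp: sums_iff)
  finally show ?thesis .
qed

lemma el_pois:
  assumes S: "S \<in> space (prob_algebra M)" and lam: "0 \<le> lam"
  shows "el M (poisson_pp M lam S) n = ennreal (poi lam n)"
proof -
  have "el M (poisson_pp M lam S) n = (\<integral>\<^sup>+k. el M (Lk M k S) n \<partial>poisson_card lam)"
    unfolding el_def poisson_pp_Lk[OF S]
    by (rule emeasure_bind_prob_algebra[OF _ Lk_kernel_count[OF S] len_set_sets])
       (use prob_space_poisson_card[OF lam] in \<open>simp add: space_prob_algebra\<close>)
  also have "\<dots> = (\<Sum>k. if k = n then ennreal (poi lam k) else 0)"
    by (simp add: nn_integral_poisson_card el_Lk[OF S] if_distrib eq_commute cong: if_cong)
  also have "\<dots> = ennreal (poi lam n)"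
    by (rule sums_unique[OF sums_single, symmetric])
  finally show ?thesis .
qed


locale pred_setup =
  fixes M :: "'a measure" and ps lb :: "'a \<Rightarrow> real" and fs sb :: "'a \<Rightarrow> 'a measure"
  assumes ps_meas: "ps \<in> borel_measurable M" and ps_rng: "\<And>x. x \<in> space M \<Longrightarrow> 0 \<le> ps x \<and> ps x \<le> 1"
    and fs_k: "fs \<in> M \<rightarrow>\<^sub>M prob_algebra M"
    and lb_meas: "lb \<in> borel_measurable M" and lb_nn: "\<And>x. x \<in> space M \<Longrightarrow> 0 \<le> lb x"
    and sb_k: "sb \<in> M \<rightarrow>\<^sub>M prob_algebra M"
    and ne: "space M \<noteq> {}"
begin

definition "Kp x = superpose M (bernoulli_pp M (ps x) (fs x)) (poisson_pp M (lb x) (sb x))"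
definition "F xs = superpose_list M (map Kp xs)"

lemma pred_eq: "predicted_pp M ps fs lb sb Phi = Phi \<bind> F"
  unfolding predicted_pp_def F_def Kp_def ..

lemma bern_meas: "(\<lambda>x. bernoulli_pp M (ps x) (fs x)) \<in> M \<rightarrow>\<^sub>M prob_algebra (listM M)"
  by (rule measurable_bernoulli_pp[OF ps_meas ps_rng fs_k])

lemma pois_meas: "(\<lambda>x. poisson_pp M (lb x) (sb x)) \<in> M \<rightarrow>\<^sub>M prob_algebra (listM M)"
  by (rule measurable_poisson_pp[OF lb_meas lb_nn sb_k ne])

lemma Kp_meas: "Kp \<in> M \<rightarrow>\<^sub>M prob_algebra (listM M)"
  unfolding Kp_def[abs_def] by (rule measurable_superpose_kernel[OF bern_meas pois_meas ne])

lemma F_meas: "F \<in> listM M \<rightarrow>\<^sub>M prob_algebra (listM M)"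
  unfolding F_def[abs_def] by (rule measurable_superpose_list_kernel[OF Kp_meas ne])

lemma fs_space: "x \<in> space M \<Longrightarrow> fs x \<in> space (prob_algebra M)"
  using measurable_space[OF fs_k] by auto
lemma sb_space: "x \<in> space M \<Longrightarrow> sb x \<in> space (prob_algebra M)"
  using measurable_space[OF sb_k] by auto
lemma bern_space: "x \<in> space M \<Longrightarrow> bernoulli_pp M (ps x) (fs x) \<in> space (prob_algebra (listM M))"
  using measurable_space[OF bern_meas] by auto
lemma pois_space: "x \<in> space M \<Longrightarrow> poisson_pp M (lb x) (sb x) \<in> space (prob_algebra (listM M))"
  using measurable_space[OF pois_meas] by auto
lemma Kp_space: "x \<in> space M \<Longrightarrow> Kp x \<in> space (prob_algebra (listM M))"
  using measurable_space[OF Kp_meas] by auto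

definition "g B x = ennreal (ps x) * emeasure (fs x) B + ennreal (lb x) * emeasure (sb x) B"

lemma g_meas:
  assumes B: "B \<in> sets M" shows "g B \<in> borel_measurable M"
proof -
  note [measurable] = measurable_emeasure_kernel[OF measurable_prob_algebraD[OF fs_k] B]
        measurable_emeasure_kernel[OF measurable_prob_algebraD[OF sb_k] B] ps_meas lb_meas
  show ?thesis unfolding g_def[abs_def] by measurable
qed

lemma np_Kp:
  assumes x: "x \<in> space M" and B: "B \<in> sets M"
  shows "(\<integral>\<^sup>+xs. of_nat (npoints B xs) \<partial>Kp x) = g B x"
  unfolding Kp_def g_def
  using nn_integral_npoints_superpose[OF bern_space[OF x] pois_space[OF x] ne B]
        nn_integral_npoints_bern[OF fs_space[OF x] _ _ B] nn_integral_npoints_pois[OF sb_space[OF x] _ B]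
        ps_rng[OF x] lb_nn[OF x]
  by simp

lemma np_F:
  assumes xs: "xs \<in> lists (space M)" and B: "B \<in> sets M"
  shows "(\<integral>\<^sup>+ys. of_nat (npoints B ys) \<partial>F xs) = (\<Sum>x\<leftarrow>xs. g B x)"
proof -
  have "set (map Kp xs) \<subseteq> space (prob_algebra (listM M))" using xs Kp_space by auto
  then have "(\<integral>\<^sup>+ys. of_nat (npoints B ys) \<partial>F xs) = (\<Sum>P\<leftarrow>map Kp xs. \<integral>\<^sup>+ys. of_nat (npoints B ys) \<partial>P)"
    unfolding F_def by (rule npoints_superpose_list[OF _ ne B])
  also have "\<dots> = (\<Sum>x\<leftarrow>xs. g B x)"
    using xs by (induction xs) (auto simp: np_Kp B)
  finally show ?thesis .
qed

definition "Q x = elf M (Kp x)"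

lemma elf_F:
  assumes xs: "xs \<in> lists (space M)"
  shows "elf M (F xs) = prod_list (map Q xs)"
proof -
  have "set (map Kp xs) \<subseteq> space (prob_algebra (listM M))" using xs Kp_space by auto
  then show ?thesis unfolding F_def Q_def
    by (simp add: elf_superpose_list[OF _ ne] map_map comp_def)
qed

definition "qr x i = (1 - ps x) * poi (lb x) i + (if i = 0 then 0 else ps x * poi (lb x) (i - 1))"

lemma qr_nonneg: "x \<in> space M \<Longrightarrow> 0 \<le> qr x i"
  using ps_rng[of x] lb_nn[of x] poi_nonneg[of "lb x"] by (auto simp: qr_def)

lemma Q_nth:
  assumes x: "x \<in> space M"
  shows "fps_nth (Q x) i = ennreal (qr x i)"
proof -
  have p: "0 \<le> ps x" "ps x \<le> 1" using ps_rng[OF x] by auto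
  have l: "0 \<le> lb x" using lb_nn[OF x] .
  define e where "e a = (if a = 0 then ennreal (1 - ps x) else if a = 1 then ennreal (ps x) else 0)" for a :: nat
  have "fps_nth (Q x) i = (\<Sum>a=0..i. e a * ennreal (poi (lb x) (i - a)))"
    unfolding Q_def Kp_def elf_superpose[OF bern_space[OF x] pois_space[OF x] ne]
    by (simp add: fps_mult_nth elf_def el_bern[OF fs_space[OF x] p] el_pois[OF sb_space[OF x] l] e_def)
  also have "\<dots> = ennreal (qr x i)"
  proof (cases i)
    case 0 then show ?thesis using p l by (simp add: e_def qr_def ennreal_mult')
  next
    case (Suc i')
    have "(\<Sum>a=0..Suc i'. e a * ennreal (poi (lb x) (Suc i' - a)))
        = e 0 * ennreal (poi (lb x) (Suc i')) + (e 1 * ennreal (poi (lb x) i') + (\<Sum>a=2..Suc i'. e a * ennreal (poi (lb x) (Suc i' - a))))"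
      by (simp add: sum.atLeast_Suc_atMost numeral_2_eq_2)
    also have "(\<Sum>a=2..Suc i'. e a * ennreal (poi (lb x) (Suc i' - a))) = 0"
      by (intro sum.neutral) (auto simp: e_def)
    finally show ?thesis
      using p l poi_nonneg[OF l] Suc
      by (simp add: e_def qr_def ennreal_mult' ennreal_plus mult_nonneg_nonneg)
  qed
  finally show ?thesis .
qed

end


lemma iid_pp_Lk:
  assumes S: "S \<in> space (prob_algebra M)"
  shows "iid_pp M (measure_pmf rho) S = measure_pmf rho \<bind> (\<lambda>m. Lk M m S)"
  unfolding iid_pp_def
  by (rule bind_cong[OF refl], rule Lk_eq) (use S in \<open>auto simp: space_prob_algebra\<close>)

lemma Lk_kernel_pmf:
  assumes S: "S \<in> space (prob_algebra M)"
  shows "(\<lambda>m. Lk M m S) \<in> measure_pmf rho \<rightarrow>\<^sub>M prob_algebra (listM M)"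
  using Lk_in_space[OF S] by simp

lemma nn_integral_iid:
  assumes S: "S \<in> space (prob_algebra M)" and h: "h \<in> borel_measurable (listM M)"
  shows "(\<integral>\<^sup>+xs. h xs \<partial>iid_pp M (measure_pmf rho) S) = (\<Sum>m. ennreal (pmf rho m) * (\<integral>\<^sup>+xs. h xs \<partial>Lk M m S))"
  unfolding iid_pp_Lk[OF S]
  by (subst nn_integral_bind[OF h measurable_prob_algebraD[OF Lk_kernel_pmf[OF S]]])
     (simp add: nn_integral_measure_pmf nn_integral_count_space_nat)

lemma prob_space_iid:
  assumes S: "S \<in> space (prob_algebra M)"
  shows "prob_space (iid_pp M (measure_pmf rho) S)"
  unfolding iid_pp_Lk[OF S]
  by (rule prob_space_bind'[OF _ Lk_kernel_pmf[OF S]]) (simp add: space_prob_algebra prob_space_measure_pmf)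

lemma sets_iid[simp]: "sets (iid_pp M (measure_pmf rho) S) = sets (listM M)"
  unfolding iid_pp_def by (subst sets_bind) auto

context pred_setup
begin

lemma Q_nth_meas: "(\<lambda>x. fps_nth (Q x) m) \<in> borel_measurable M"
proof -
  have "(\<lambda>x. emeasure (Kp x) {xs \<in> lists (space M). length xs = m}) \<in> borel_measurable M"
    by (rule measurable_emeasure_kernel[OF measurable_prob_algebraD[OF Kp_meas] len_set_sets])
  then show ?thesis by (simp add: Q_def elf_def el_def)
qed

lemma prodQ_meas: "(\<lambda>xs. fps_nth (prod_list (map Q xs)) n) \<in> borel_measurable (listM M)"
proof (rule measurable_from_listM)
  fix k
  have gen: "set is \<subseteq> {..<k} \<Longrightarrow> \<forall>n. (\<lambda>f. fps_nth (prod_list (map (\<lambda>i. Q (f i)) is)) n) \<in> borel_measurable (PiN k M)" for "is"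
  proof (induction "is")
    case Nil then show ?case by simp
  next
    case (Cons i "is")
    have ci: "(\<lambda>f. f i) \<in> PiN k M \<rightarrow>\<^sub>M M" using Cons.prems by (intro measurable_component_singleton) auto
    show ?case
    proof
      fix n
      have IH: "(\<lambda>f. fps_nth (prod_list (map (\<lambda>i. Q (f i)) is)) m) \<in> borel_measurable (PiN k M)" for m
        using Cons by auto
      have Qi: "(\<lambda>f. fps_nth (Q (f i)) m) \<in> borel_measurable (PiN k M)" for m
        using measurable_compose[OF ci Q_nth_meas] .
      note [measurable] = IH Qi
      have "(\<lambda>f. \<Sum>a=0..n. fps_nth (Q (f i)) a * fps_nth (prod_list (map (\<lambda>i. Q (f i)) is)) (n - a)) \<in> borel_measurable (PiN k M)"
        by measurable
      then show "(\<lambda>f. fps_nth (prod_list (map (\<lambda>i. Q (f i)) (i # is))) n) \<in> borel_measurable (PiN k M)"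
        by (simp add: fps_mult_nth)
    qed
  qed
  have "(\<lambda>f. fps_nth (prod_list (map Q (map f [0..<k]))) n) = (\<lambda>f. fps_nth (prod_list (map (\<lambda>i. Q (f i)) [0..<k])) n)"
    by (simp add: comp_def)
  then show "(\<lambda>f. fps_nth (prod_list (map Q (map f [0..<k]))) n) \<in> borel_measurable (PiN k M)"
    using gen[of "[0..<k]"] by (simp add: atLeast0LessThan)
qed auto

lemma nn_integral_prodQ_Lk:
  assumes S: "S \<in> space (prob_algebra M)"
  defines "Cc \<equiv> Abs_fps (\<lambda>i. \<integral>\<^sup>+x. fps_nth (Q x) i \<partial>S)"
  shows "(\<integral>\<^sup>+xs. fps_nth (prod_list (map Q xs)) n \<partial>Lk M k S) = fps_nth (Cc ^ k) n"
proof (induction k arbitrary: n)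
  case 0
  have "(\<integral>\<^sup>+xs. fps_nth (prod_list (map Q xs)) n \<partial>return (listM M) []) = fps_nth (prod_list (map Q [])) n"
    by (rule nn_integral_return[OF _ prodQ_meas]) simp
  then show ?case by simp
next
  case (Suc k)
  have S': "prob_space S" "sets S = sets M" using S by (auto simp: space_prob_algebra)
  have mL: "(\<lambda>xs. fps_nth (prod_list (map Q xs)) a) \<in> borel_measurable (Lk M k S)" for a
    using prodQ_meas by (simp cong: measurable_cong_sets)
  have mS: "(\<lambda>x. fps_nth (Q x) a) \<in> borel_measurable S" for a
    using Q_nth_meas S'(2) by (simp cong: measurable_cong_sets)
  have "(\<integral>\<^sup>+xs. fps_nth (prod_list (map Q xs)) n \<partial>Lk M (Suc k) S)
      = (\<integral>\<^sup>+y. \<integral>\<^sup>+xs. (\<Sum>a=0..n. fps_nth (prod_list (map Q xs)) a * fps_nth (Q y) (n - a)) \<partial>Lk M k S \<partial>S)"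
    by (subst nn_integral_Lk_Suc[OF S prodQ_meas]) (simp add: fps_mult_nth)
  also have "\<dots> = (\<integral>\<^sup>+y. (\<Sum>a=0..n. fps_nth (Cc ^ k) a * fps_nth (Q y) (n - a)) \<partial>S)"
    using mL by (intro nn_integral_cong) (simp add: nn_integral_sum nn_integral_multc Suc)
  also have "\<dots> = (\<Sum>a=0..n. fps_nth (Cc ^ k) a * fps_nth Cc (n - a))"
    using mS by (simp add: nn_integral_sum nn_integral_cmult Cc_def)
  also have "\<dots> = fps_nth (Cc ^ Suc k) n"
    by (simp only: power_Suc2 fps_mult_nth)
  finally show ?case .
qed

end


definition KS :: "nat \<Rightarrow> nat \<Rightarrow> (nat \<Rightarrow> nat) set" where
  "KS n j = {k::nat \<Rightarrow> nat. (\<forall>i. i \<notin> {1..n} \<longrightarrow> k i = 0) \<and>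
                         (\<Sum>i=1..n. i * k i) = n \<and> (\<Sum>i=1..n. k i) = j}"

definition WW :: "nat \<Rightarrow> (nat \<Rightarrow> nat) \<Rightarrow> real" where
  "WW n k = (\<Prod>i=1..n. fact (k i) * fact i ^ k i)"

definition XX :: "nat \<Rightarrow> (nat \<Rightarrow> nat) \<Rightarrow> (nat \<Rightarrow> real) \<Rightarrow> real" where
  "XX n k x = (\<Prod>i=1..n. x i ^ k i)"

lemma partial_bell_KS: "partial_bell n j x = (\<Sum>k\<in>KS n j. fact n / WW n k * XX n k x)"
  unfolding partial_bell_def KS_def WW_def XX_def ..

lemma WW_pos: "WW n k > 0"
  unfolding WW_def by (intro prod_pos) auto

lemma KS_bound: "k \<in> KS n j \<Longrightarrow> k i \<le> n"
proof -
  assume k: "k \<in> KS n j"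
  show "k i \<le> n"
  proof (cases "i \<in> {1..n}")
    case True
    have "i * k i \<le> (\<Sum>l=1..n. l * k l)"
      using True by (intro member_le_sum) auto
    also have "\<dots> = n" using k by (simp add: KS_def)
    moreover have "1 * k i \<le> i * k i" using True by (intro mult_le_mono1) auto
    ultimately show ?thesis by linarith
  next
    case False then show ?thesis using k by (simp add: KS_def)
  qed
qed

lemma finite_KS: "finite (KS n j)"
proof -
  let ?e = "\<lambda>g i. if i \<in> {1..n} then g i else (0::nat)"
  have "KS n j \<subseteq> ?e ` (PiE {1..n} (\<lambda>_. {0..n}))"
  proof
    fix k assume k: "k \<in> KS n j"
    have "k = ?e (restrict k {1..n})" using k by (auto simp: KS_def fun_eq_iff)
    moreover have "restrict k {1..n} \<in> PiE {1..n} (\<lambda>_. {0..n})"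
      using KS_bound[OF k] by auto
    ultimately show "k \<in> ?e ` (PiE {1..n} (\<lambda>_. {0..n}))" by blast
  qed
  moreover have "finite (?e ` (PiE {1..n} (\<lambda>_. {0..n})))"
    by (intro finite_imageI finite_PiE) auto
  ultimately show ?thesis by (rule finite_subset)
qed

lemma sum_ext_supp:
  fixes k :: "nat \<Rightarrow> nat" and m N :: nat
  assumes "\<forall>i. i \<notin> {1..m} \<longrightarrow> k i = 0" "m \<le> N" "\<And>i. g i 0 = 0"
  shows "(\<Sum>i=1..N. g i (k i)) = (\<Sum>i=1..m. (g i (k i) :: 'b::comm_monoid_add))"
  by (rule sum.mono_neutral_right) (use assms in auto)

lemma prod_ext_supp:
  fixes k :: "nat \<Rightarrow> nat" and m N :: nat
  assumes "\<forall>i. i \<notin> {1..m} \<longrightarrow> k i = 0" "m \<le> N" "\<And>i. g i 0 = 1"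
  shows "(\<Prod>i=1..N. g i (k i)) = (\<Prod>i=1..m. (g i (k i) :: 'b::comm_monoid_mult))"
  by (rule prod.mono_neutral_right) (use assms in auto)

lemma sum_upd:
  assumes "finite S" "i \<in> S"
  shows "(\<Sum>l\<in>S. g l ((k(i := v)) l)) = g i v + (\<Sum>l\<in>S-{i}. (g l (k l) :: 'b::comm_monoid_add))"
  using assms by (simp add: sum.remove)

lemma prod_upd:
  assumes "finite S" "i \<in> S"
  shows "(\<Prod>l\<in>S. g l ((k(i := v)) l)) = g i v * (\<Prod>l\<in>S-{i}. (g l (k l) :: 'b::comm_monoid_mult))"
  using assms by (simp add: prod.remove)


lemma up_in_KS:
  assumes i: "i \<in> {1..n}" and k: "k \<in> KS (n - i) j"
  shows "k(i := Suc (k i)) \<in> KS n (Suc j)"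
proof -
  have supp: "\<forall>l. l \<notin> {1..n-i} \<longrightarrow> k l = 0" using k by (simp add: KS_def)
  have s1: "(\<Sum>l=1..n. l * k l) = n - i"
    using sum_ext_supp[OF supp, of n "\<lambda>l v. l * v"] k by (simp add: KS_def)
  have s2: "(\<Sum>l=1..n. k l) = j"
    using sum_ext_supp[OF supp, of n "\<lambda>l v. v"] k by (simp add: KS_def)
  have r1: "(\<Sum>l=1..n. l * k l) = i * k i + (\<Sum>l\<in>{1..n}-{i}. l * k l)"
    using i by (simp add: sum.remove)
  have r2: "(\<Sum>l=1..n. k l) = k i + (\<Sum>l\<in>{1..n}-{i}. k l)"
    using i by (simp add: sum.remove)
  have u1: "(\<Sum>l=1..n. l * (k(i := Suc (k i))) l) = i * Suc (k i) + (\<Sum>l\<in>{1..n}-{i}. l * k l)"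
    using sum_upd[of "{1..n}" i "\<lambda>l v. l * v" k "Suc (k i)"] i by simp
  have u2: "(\<Sum>l=1..n. (k(i := Suc (k i))) l) = Suc (k i) + (\<Sum>l\<in>{1..n}-{i}. k l)"
    using sum_upd[of "{1..n}" i "\<lambda>l v. v" k "Suc (k i)"] i by simp
  show ?thesis
    unfolding KS_def
  proof (intro CollectI conjI allI impI)
    fix l assume "l \<notin> {1..n}"
    then show "(k(i := Suc (k i))) l = 0" using i supp by auto
  next
    show "(\<Sum>l=1..n. l * (k(i := Suc (k i))) l) = n"
      using u1 r1 s1 i by (simp; linarith)
  next
    show "(\<Sum>l=1..n. (k(i := Suc (k i))) l) = Suc j"
      using u2 r2 s2 by simp
  qed
qed

lemma down_in_KS:
  assumes k: "k \<in> KS n (Suc j)" and i: "i \<in> {1..n}" and ki: "1 \<le> k i"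
  shows "k(i := k i - 1) \<in> KS (n - i) j"
proof -
  have tot1: "(\<Sum>l=1..n. l * k l) = n" and tot2: "(\<Sum>l=1..n. k l) = Suc j"
    and supp: "\<forall>l. l \<notin> {1..n} \<longrightarrow> k l = 0" using k by (auto simp: KS_def)
  have pair: "l * k l + i * k i \<le> n" if l: "l \<in> {1..n}" "l \<noteq> i" for l
  proof -
    have "(\<Sum>m\<in>{l, i}. m * k m) \<le> (\<Sum>m=1..n. m * k m)"
      using l i by (intro sum_mono2) auto
    then show ?thesis using l tot1 by simp
  qed
  have ii: "i * k i \<le> n"
    using tot1 i member_le_sum[of i "{1..n}" "\<lambda>m. m * k m"] by simp
  have supp': "\<forall>l. l \<notin> {1..n - i} \<longrightarrow> (k(i := k i - 1)) l = 0"
  proof (intro allI impI)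
    fix l assume l: "l \<notin> {1..n - i}"
    show "(k(i := k i - 1)) l = 0"
    proof (cases "l = i")
      case True
      have "k i \<le> 1"
      proof (rule ccontr)
        assume "\<not> k i \<le> 1"
        then have "i * 2 \<le> i * k i" by (intro mult_le_mono2) auto
        then have "i \<le> n - i" using ii by linarith
        then show False using l True i by auto
      qed
      then show ?thesis using True by simp
    next
      case False
      show ?thesis
      proof (cases "l \<in> {1..n}")
        case True
        have p: "l * k l + i * k i \<le> n" by (rule pair[OF True False])
        have "i \<le> i * k i" using ki by simp
        then have "l * k l \<le> n - i" using p by linarith
        moreover have "n - i < l" using l True by auto
        ultimately have "l * k l < l" by linarith
        then have "k l = 0" by (cases "k l") auto
        then show ?thesis using False by simp
      next
        case False
        then show ?thesis using supp \<open>l \<noteq> i\<close> by simp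
      qed
    qed
  qed
  have r1: "(\<Sum>l=1..n. l * k l) = i * k i + (\<Sum>l\<in>{1..n}-{i}. l * k l)"
    using i by (simp add: sum.remove)
  have r2: "(\<Sum>l=1..n. k l) = k i + (\<Sum>l\<in>{1..n}-{i}. k l)"
    using i by (simp add: sum.remove)
  have u1: "(\<Sum>l=1..n. l * (k(i := k i - 1)) l) = i * (k i - 1) + (\<Sum>l\<in>{1..n}-{i}. l * k l)"
    using sum_upd[of "{1..n}" i "\<lambda>l v. l * v" k "k i - 1"] i by simp
  have u2: "(\<Sum>l=1..n. (k(i := k i - 1)) l) = (k i - 1) + (\<Sum>l\<in>{1..n}-{i}. k l)"
    using sum_upd[of "{1..n}" i "\<lambda>l v. v" k "k i - 1"] i by simp
  have e1: "(\<Sum>l=1..n-i. l * (k(i := k i - 1)) l) = (\<Sum>l=1..n. l * (k(i := k i - 1)) l)"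
    using sum_ext_supp[OF supp', of n "\<lambda>l v. l * v"] by simp
  have e2: "(\<Sum>l=1..n-i. (k(i := k i - 1)) l) = (\<Sum>l=1..n. (k(i := k i - 1)) l)"
    using sum_ext_supp[OF supp', of n "\<lambda>l v. v"] by simp
  have "i * (k i - 1) = i * k i - i" by (simp add: diff_mult_distrib2)
  show ?thesis
    unfolding KS_def
  proof (intro CollectI conjI)
    show "\<forall>l. l \<notin> {1..n - i} \<longrightarrow> (k(i := k i - 1)) l = 0" by (rule supp')
    show "(\<Sum>l=1..n-i. l * (k(i := k i - 1)) l) = n - i"
      using e1 u1 r1 tot1 \<open>i * (k i - 1) = i * k i - i\<close> ki by (simp add: mult_le_mono2)
    show "(\<Sum>l=1..n-i. (k(i := k i - 1)) l) = j"
      using e2 u2 r2 tot2 ki by simp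
  qed
qed


lemma term_identity:
  assumes i: "i \<in> {1..n}" and k: "k \<in> KS (n - i) j"
  shows "real (n choose i) * x i * (fact (n - i) / WW (n - i) k * XX (n - i) k x)
       = real (Suc (k i)) * (fact n / WW n (k(i := Suc (k i))) * XX n (k(i := Suc (k i))) x)"
proof -
  have supp: "\<forall>l. l \<notin> {1..n-i} \<longrightarrow> k l = 0" using k by (simp add: KS_def)
  have w1: "WW (n - i) k = WW n k"
    unfolding WW_def using prod_ext_supp[OF supp, of n "\<lambda>l v. (fact v * fact l ^ v :: real)"] by simp
  have x1: "XX (n - i) k x = XX n k x"
    unfolding XX_def using prod_ext_supp[OF supp, of n "\<lambda>l v. x l ^ v"] by simp
  have w2: "WW n (k(i := Suc (k i))) = WW n k * real (Suc (k i)) * fact i"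
  proof -
    have a: "WW n (k(i := Suc (k i))) = (fact (Suc (k i)) * fact i ^ Suc (k i)) * (\<Prod>l\<in>{1..n}-{i}. fact (k l) * fact l ^ k l)"
      unfolding WW_def using prod_upd[of "{1..n}" i "\<lambda>l v. (fact v * fact l ^ v :: real)" k "Suc (k i)"] i by simp
    have b: "WW n k = (fact (k i) * fact i ^ k i) * (\<Prod>l\<in>{1..n}-{i}. fact (k l) * fact l ^ k l)"
      unfolding WW_def using i by (simp add: prod.remove)
    show ?thesis unfolding a b by (simp add: algebra_simps)
  qed
  have x2: "XX n (k(i := Suc (k i))) x = XX n k x * x i"
  proof -
    have a: "XX n (k(i := Suc (k i))) x = x i ^ Suc (k i) * (\<Prod>l\<in>{1..n}-{i}. x l ^ k l)"
      unfolding XX_def using prod_upd[of "{1..n}" i "\<lambda>l v. x l ^ v" k "Suc (k i)"] i by simp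
    have b: "XX n k x = x i ^ k i * (\<Prod>l\<in>{1..n}-{i}. x l ^ k l)"
      unfolding XX_def using i by (simp add: prod.remove)
    show ?thesis unfolding a b by (simp add: algebra_simps)
  qed
  have bin: "real (n choose i) = fact n / (fact i * fact (n - i))"
    using i by (simp add: binomial_fact)
  have W: "WW n k > 0" by (rule WW_pos)
  have a: "real (Suc (k i)) \<noteq> 0" by simp
  have f1: "(fact i :: real) \<noteq> 0" and f2: "(fact (n - i) :: real) \<noteq> 0" by simp_all
  show ?thesis
    unfolding w1 x1 w2 x2 bin using W a f1 f2
    by (simp add: divide_simps)
qed

lemma partial_bell_rec:
  "real (Suc j) * partial_bell n (Suc j) x = (\<Sum>i=1..n. real (n choose i) * x i * partial_bell (n - i) j x)"
proof -
  define T where "T k' = fact n / WW n k' * XX n k' x" for k'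
  define G where "G q = real (fst q (snd q)) * T (fst q)" for q :: "(nat \<Rightarrow> nat) \<times> nat"
  define h where "h p = ((snd p)(fst p := Suc (snd p (fst p))), fst p)" for p :: "nat \<times> (nat \<Rightarrow> nat)"
  define A where "A = Sigma {1..n} (\<lambda>i. KS (n - i) j)"
  define B where "B = Sigma (KS n (Suc j)) (\<lambda>k'. {i\<in>{1..n}. 1 \<le> k' i})"
  have "(\<Sum>i=1..n. real (n choose i) * x i * partial_bell (n - i) j x)
      = (\<Sum>i=1..n. \<Sum>k\<in>KS (n - i) j. real (n choose i) * x i * (fact (n - i) / WW (n - i) k * XX (n - i) k x))"
    by (simp add: partial_bell_KS sum_distrib_left)
  also have "\<dots> = (\<Sum>i=1..n. \<Sum>k\<in>KS (n - i) j. G (h (i, k)))"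
  proof (intro sum.cong refl)
    fix i k assume "i \<in> {1..n}" "k \<in> KS (n - i) j"
    then show "real (n choose i) * x i * (fact (n - i) / WW (n - i) k * XX (n - i) k x) = G (h (i, k))"
      unfolding G_def h_def T_def fst_conv snd_conv fun_upd_same by (rule term_identity)
  qed
  also have "\<dots> = (\<Sum>p\<in>A. G (h p))"
    unfolding A_def by (subst sum.Sigma) (auto simp: finite_KS)
  also have "\<dots> = (\<Sum>q\<in>B. G q)"
  proof (rule sum.reindex_bij_betw)
    define h' where "h' q = (snd q, (fst q)(snd q := fst q (snd q) - 1))" for q :: "(nat \<Rightarrow> nat) \<times> nat"
    show "bij_betw h A B"
    proof (rule bij_betw_byWitness[where f'=h'])
      show "\<forall>a\<in>A. h' (h a) = a" by (auto simp: h_def h'_def)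
      show "\<forall>a'\<in>B. h (h' a') = a'" by (auto simp: h_def h'_def B_def)
      show "h ` A \<subseteq> B" by (auto simp: h_def A_def B_def intro!: up_in_KS)
      show "h' ` B \<subseteq> A" using down_in_KS by (force simp: h'_def A_def B_def)
    qed
  qed
  also have "\<dots> = (\<Sum>k'\<in>KS n (Suc j). \<Sum>i\<in>{i\<in>{1..n}. 1 \<le> k' i}. real (k' i) * T k')"
    unfolding B_def G_def by (subst sum.Sigma) (auto simp: finite_KS case_prod_beta)
  also have "\<dots> = (\<Sum>k'\<in>KS n (Suc j). real (Suc j) * T k')"
  proof (intro sum.cong refl)
    fix k' assume k': "k' \<in> KS n (Suc j)"
    have "(\<Sum>i\<in>{i\<in>{1..n}. 1 \<le> k' i}. real (k' i)) = (\<Sum>i=1..n. real (k' i))"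
      by (rule sum.mono_neutral_left) auto
    also have "\<dots> = real (Suc j)" using k' by (simp add: KS_def flip: of_nat_sum)
    finally show "(\<Sum>i\<in>{i\<in>{1..n}. 1 \<le> k' i}. real (k' i) * T k') = real (Suc j) * T k'"
      by (simp add: sum_distrib_right[symmetric])
  qed
  also have "\<dots> = real (Suc j) * partial_bell n (Suc j) x"
    by (simp add: partial_bell_KS sum_distrib_left T_def)
  finally show ?thesis ..
qed

lemma partial_bell_0: "partial_bell n 0 x = (if n = 0 then 1 else 0)"
proof -
  have "KS n 0 = (if n = 0 then {\<lambda>_. 0} else {})"
  proof (cases "n = 0")
    case True
    then show ?thesis by (auto simp: KS_def fun_eq_iff)
  next
    case False
    have "k \<notin> KS n 0" for k
    proof
      assume k: "k \<in> KS n 0"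
      then have "\<forall>i\<in>{1..n}. k i = 0" by (simp add: KS_def)
      then have "(\<Sum>i=1..n. i * k i) = 0" by simp
      then show False using k False by (simp add: KS_def)
    qed
    then show ?thesis using False by auto
  qed
  then show ?thesis by (simp add: partial_bell_KS WW_def XX_def)
qed

lemma partial_bell_big: "n < j \<Longrightarrow> partial_bell n j x = 0"
proof -
  assume nj: "n < j"
  have "k \<notin> KS n j" for k
  proof
    assume k: "k \<in> KS n j"
    have "(\<Sum>i=1..n. k i) \<le> (\<Sum>i=1..n. i * k i)"
      by (intro sum_mono) simp
    then show False using k nj by (simp add: KS_def)
  qed
  then have "KS n j = {}" by auto
  then show ?thesis by (simp add: partial_bell_KS)
qed

lemma partial_bell_nonneg: "(\<And>i. 0 \<le> x i) \<Longrightarrow> 0 \<le> partial_bell n j x"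
  unfolding partial_bell_KS XX_def using WW_pos
  by (intro sum_nonneg mult_nonneg_nonneg divide_nonneg_pos prod_nonneg) (auto intro: less_imp_le)


lemma bell_fps:
  fixes b :: "nat \<Rightarrow> real"
  defines "A \<equiv> Abs_fps (\<lambda>i. if i = 0 then 0 else b i / fact i)"
  shows "fps_nth (A ^ j) n = fact j / fact n * partial_bell n j b"
proof (induction j arbitrary: n)
  case 0
  then show ?case by (simp add: partial_bell_0)
next
  case (Suc j)
  have "fps_nth (A ^ Suc j) n = (\<Sum>i=0..n. fps_nth A i * fps_nth (A ^ j) (n - i))"
    by (simp add: fps_mult_nth)
  also have "\<dots> = (\<Sum>i=1..n. fps_nth A i * fps_nth (A ^ j) (n - i))"
    by (simp add: sum.atLeast_Suc_atMost A_def)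
  also have "\<dots> = (\<Sum>i=1..n. fact j / fact n * (real (n choose i) * b i * partial_bell (n - i) j b))"
  proof (intro sum.cong refl)
    fix i assume i: "i \<in> {1..n}"
    have bin: "real (n choose i) = fact n / (fact i * fact (n - i))"
      using i by (simp add: binomial_fact)
    show "fps_nth A i * fps_nth (A ^ j) (n - i) = fact j / fact n * (real (n choose i) * b i * partial_bell (n - i) j b)"
      using i unfolding Suc bin by (simp add: A_def divide_simps)
  qed
  also have "\<dots> = fact j / fact n * (real (Suc j) * partial_bell n (Suc j) b)"
    by (simp only: partial_bell_rec sum_distrib_left)
  also have "\<dots> = fact (Suc j) / fact n * partial_bell n (Suc j) b"
    by (simp add: field_simps)
  finally show ?case .
qed

lemma fps_pow_coeff:
  fixes b :: "nat \<Rightarrow> real"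
  shows "fps_nth (Abs_fps (\<lambda>i. b i / fact i) ^ m) n =
    (\<Sum>j\<le>n. partial_bell n j b * (if j \<le> m then fact m / (fact n * fact (m - j)) * b 0 ^ (m - j) else 0))"
proof -
  define A where "A = Abs_fps (\<lambda>i. if i = 0 then 0 else b i / fact i)"
  have C: "Abs_fps (\<lambda>i. b i / fact i) = A + fps_const (b 0)"
    by (rule fps_ext) (simp add: A_def)
  define t where "t j = partial_bell n j b * (if j \<le> m then fact m / (fact n * fact (m - j)) * b 0 ^ (m - j) else 0)" for j
  have "fps_nth (Abs_fps (\<lambda>i. b i / fact i) ^ m) n = (\<Sum>j\<le>m. of_nat (m choose j) * fps_nth (A ^ j) n * b 0 ^ (m - j))"
    unfolding C binomial_ring by (simp add: fps_sum_nth fps_of_nat fps_mult_right_const_nth)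
  also have "\<dots> = (\<Sum>j\<le>m. t j)"
  proof (intro sum.cong refl)
    fix j assume j: "j \<in> {..m}"
    have bin: "real (m choose j) = fact m / (fact j * fact (m - j))"
      using j by (simp add: binomial_fact)
    show "of_nat (m choose j) * fps_nth (A ^ j) n * b 0 ^ (m - j) = t j"
      using j unfolding bell_fps[of b, folded A_def] bin t_def by (simp add: divide_simps)
  qed
  also have "\<dots> = (\<Sum>j\<le>m + n. t j)"
    by (rule sum.mono_neutral_left) (auto simp: t_def)
  also have "\<dots> = (\<Sum>j\<le>n. t j)"
    by (rule sum.mono_neutral_right) (auto simp: t_def partial_bell_big)
  finally show ?thesis by (simp add: t_def)
qed


lemma suminf_sum_list_ennreal:
  "(\<Sum>i. \<Sum>x\<leftarrow>xs. f i x :: ennreal) = (\<Sum>x\<leftarrow>xs. \<Sum>i. f i x)"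
  by (induction xs) (simp_all add: suminf_add[symmetric])

lemma npoints_UN:
  assumes "disjoint_family A"
  shows "(\<Sum>i. (of_nat (npoints (A i) xs) :: ennreal)) = of_nat (npoints (\<Union>i. A i) xs)"
  unfolding npoints_sum_list suminf_sum_list_ennreal suminf_indicator[OF assms] ..

lemma intensity_emeasure:
  assumes P: "sets P = sets (listM M)" and B: "B \<in> sets M"
  shows "emeasure (intensity M P) B = (\<integral>\<^sup>+xs. of_nat (npoints B xs) \<partial>P)"
  unfolding intensity_def
proof (rule emeasure_measure_of_sigma[OF sets.sigma_algebra_axioms _ _ B])
  show "positive (sets M) (\<lambda>B. \<integral>\<^sup>+ xs. of_nat (npoints B xs) \<partial>P)"
    by (simp add: positive_def npoints_def)
  show "countably_additive (sets M) (\<lambda>B. \<integral>\<^sup>+ xs. of_nat (npoints B xs) \<partial>P)"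
    unfolding countably_additive_def
  proof (intro allI impI)
    fix A :: "nat \<Rightarrow> _" assume A: "range A \<subseteq> sets M" "disjoint_family A" "\<Union> (range A) \<in> sets M"
    have m: "(\<lambda>xs. (of_nat (npoints (A i) xs) :: ennreal)) \<in> borel_measurable P" for i
      using measurable_npoints'[of "A i" M] A(1) P by (simp cong: measurable_cong_sets)
    have "(\<Sum>i. \<integral>\<^sup>+ xs. of_nat (npoints (A i) xs) \<partial>P) = (\<integral>\<^sup>+ xs. (\<Sum>i. of_nat (npoints (A i) xs)) \<partial>P)"
      by (rule nn_integral_suminf[symmetric]) (use m in auto)
    also have "\<dots> = (\<integral>\<^sup>+ xs. of_nat (npoints (\<Union>i. A i) xs) \<partial>P)"
      by (simp add: npoints_UN[OF A(2)])
    finally show "(\<Sum>i. \<integral>\<^sup>+ xs. of_nat (npoints (A i) xs) \<partial>P) = (\<integral>\<^sup>+ xs. of_nat (npoints (\<Union> (range A)) xs) \<partial>P)" .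
  qed
qed

lemma fps_pow_ennreal:
  assumes c: "\<And>i. 0 \<le> c i"
  shows "fps_nth (Abs_fps (\<lambda>i. ennreal (c i)) ^ m) n = ennreal (fps_nth (Abs_fps c ^ m) n)
       \<and> 0 \<le> fps_nth (Abs_fps c ^ m) n"
proof (induction m arbitrary: n)
  case 0 then show ?case by simp
next
  case (Suc m)
  have "fps_nth (Abs_fps (\<lambda>i. ennreal (c i)) ^ Suc m) n = (\<Sum>i=0..n. ennreal (c i) * ennreal (fps_nth (Abs_fps c ^ m) (n - i)))"
    using Suc by (simp add: fps_mult_nth)
  also have "\<dots> = (\<Sum>i=0..n. ennreal (c i * fps_nth (Abs_fps c ^ m) (n - i)))"
    using Suc c by (intro sum.cong refl) (simp add: ennreal_mult)
  also have "\<dots> = ennreal (\<Sum>i=0..n. c i * fps_nth (Abs_fps c ^ m) (n - i))"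
    using Suc c by (intro sum_ennreal) simp
  finally show ?case using Suc c by (simp add: fps_mult_nth sum_nonneg)
qed

lemma poi_le_1: "0 \<le> lam \<Longrightarrow> poi lam k \<le> 1"
  using sum_le_suminf[of "poi lam" "{k}"] poi_sums[of lam] poi_nonneg[of lam]
  by (simp add: sums_iff)


context pred_setup
begin

lemma part1:
  assumes s': "s \<in> space (prob_algebra M)" and B: "B \<in> sets M"
  shows "emeasure (intensity M (iid_pp M (measure_pmf rho) s \<bind> F)) B =
         (\<integral>\<^sup>+x. g B x \<partial>intensity M (iid_pp M (measure_pmf rho) s))"
proof -
  define Phi where "Phi = iid_pp M (measure_pmf rho) s"
  have s2: "prob_space s" "sets s = sets M" using s' by (auto simp: space_prob_algebra)
  have prev_space: "Phi \<in> space (prob_algebra (listM M))"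
    using prob_space_iid[OF s'] by (simp add: Phi_def space_prob_algebra)
  have sp_prev: "space Phi = lists (space M)"
    using sets_eq_imp_space_eq[of Phi "listM M"] by (simp add: Phi_def)
  have sets_pred: "sets (Phi \<bind> F) = sets (listM M)" by (rule sets_bind'[OF prev_space F_meas])
  have Fprev: "F \<in> Phi \<rightarrow>\<^sub>M subprob_algebra (listM M)"
    using measurable_prob_algebraD[OF F_meas] by (simp add: Phi_def cong: measurable_cong_sets)
  define C where "C = (\<Sum>m. ennreal (pmf rho m) * of_nat m)"
  define I where "I = (\<integral>\<^sup>+x. g B x \<partial>s)"
  have gs: "g B \<in> borel_measurable s" using g_meas[OF B] s2(2) by (simp cong: measurable_cong_sets)
  have "emeasure (intensity M (Phi \<bind> F)) B = (\<integral>\<^sup>+ys. of_nat (npoints B ys) \<partial>(Phi \<bind> F))"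
    by (rule intensity_emeasure[OF sets_pred B])
  also have "\<dots> = (\<integral>\<^sup>+xs. \<integral>\<^sup>+ys. of_nat (npoints B ys) \<partial>F xs \<partial>Phi)"
    by (rule nn_integral_bind[OF measurable_npoints'[OF B] Fprev])
  also have "\<dots> = (\<integral>\<^sup>+xs. (\<Sum>x\<leftarrow>xs. g B x) \<partial>Phi)"
    by (intro nn_integral_cong) (simp add: sp_prev np_F B)
  also have "\<dots> = (\<Sum>m. ennreal (pmf rho m) * (of_nat m * I))"
    unfolding Phi_def I_def
    by (simp add: nn_integral_iid[OF s' measurable_sum_list_listM[OF g_meas[OF B]]]
                  nn_integral_sum_list_Lk[OF s' g_meas[OF B]])
  also have "\<dots> = C * I"
    by (simp add: C_def mult.assoc[symmetric])
  finally have lhs: "emeasure (intensity M (Phi \<bind> F)) B = C * I" .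
  have intprev: "intensity M Phi = density s (\<lambda>_. C)"
  proof (rule measure_eqI)
    have "sets (intensity M Phi) = sets M"
      unfolding intensity_def by (simp add: sets_measure_of[OF sets.space_closed] sets.sigma_sets_eq)
    then show si: "sets (intensity M Phi) = sets (density s (\<lambda>_. C))" using s2 by simp
    fix A assume A: "A \<in> sets (intensity M Phi)"
    then have A': "A \<in> sets M" using si s2 by simp
    have "emeasure (intensity M Phi) A = (\<integral>\<^sup>+ys. of_nat (npoints A ys) \<partial>Phi)"
      by (rule intensity_emeasure[OF _ A']) (simp add: Phi_def)
    also have "\<dots> = (\<Sum>m. ennreal (pmf rho m) * (of_nat m * emeasure s A))"
      unfolding Phi_def
      by (simp add: nn_integral_iid[OF s' measurable_npoints'[OF A']] nn_integral_npoints_Lk[OF s' A'])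
    also have "\<dots> = C * emeasure s A"
      by (simp add: C_def mult.assoc[symmetric])
    also have "\<dots> = emeasure (density s (\<lambda>_. C)) A"
      using A' s2 by (simp add: emeasure_density nn_integral_cmult_indicator)
    finally show "emeasure (intensity M Phi) A = emeasure (density s (\<lambda>_. C)) A" .
  qed
  have "(\<integral>\<^sup>+x. g B x \<partial>intensity M Phi) = (\<integral>\<^sup>+x. C * g B x \<partial>s)"
    unfolding intprev by (rule nn_integral_density) (use gs in auto)
  also have "\<dots> = C * I" unfolding I_def by (rule nn_integral_cmult[OF gs])
  finally show ?thesis using lhs by (simp add: Phi_def)
qed

end


lemma qr_identity_aux:
  fixes p l E a f :: real
  assumes "a > 0" "f > 0"
  shows "(1 - p) * (l * E / (a * f)) + p * (E / f) = E * ((1 - p) * l + a * p) / (a * f)"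
  using assms by (simp add: field_simps)

lemma qr_identity:
  fixes p l :: real
  shows "(1 - p) * (l ^ Suc i / fact (Suc i) * exp (- l)) + p * (l ^ i / fact i * exp (- l))
       = l ^ i * exp (- l) * ((1 - p) * l + real (Suc i) * p) / fact (Suc i)"
proof -
  have f: "(fact (Suc i) :: real) = real (Suc i) * fact i" by simp
  have "(1 - p) * (l ^ Suc i / fact (Suc i) * exp (- l)) = (1 - p) * (l * (l ^ i * exp (- l)) / (real (Suc i) * fact i))"
    unfolding f by simp
  moreover have "p * (l ^ i / fact i * exp (- l)) = p * ((l ^ i * exp (- l)) / fact i)" by simp
  ultimately show ?thesis
    unfolding f using qr_identity_aux[of "real (Suc i)" "fact i" p l "l ^ i * exp (- l)"] by simp
qed

context pred_setup
begin

definition "hq i x = (if i = 0 then (1 - ps x) * exp (- lb x)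
   else lb x ^ (i - 1) * exp (- lb x) * ((1 - ps x) * lb x + real i * ps x))"

lemma hq_meas: "hq i \<in> borel_measurable M"
  unfolding hq_def[abs_def] using ps_meas lb_meas by measurable

lemma qr_hq: "x \<in> space M \<Longrightarrow> qr x i = hq i x / fact i"
proof (cases i)
  case 0 then show ?thesis by (simp add: qr_def hq_def poi_def)
next
  case (Suc i')
  then show ?thesis using qr_identity[of "ps x" "lb x" i'] by (simp add: qr_def hq_def poi_def)
qed

lemma qr_le_1: "x \<in> space M \<Longrightarrow> qr x i \<le> 1"
proof -
  assume x: "x \<in> space M"
  have p: "0 \<le> ps x" "ps x \<le> 1" using ps_rng[OF x] by auto
  have a: "poi (lb x) k \<le> 1" for k using poi_le_1 lb_nn[OF x] by auto
  have "(1 - ps x) * poi (lb x) i \<le> (1 - ps x) * 1" using a p by (intro mult_left_mono) auto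
  moreover have "ps x * poi (lb x) (i - 1) \<le> ps x * 1" using a p by (intro mult_left_mono) auto
  ultimately show ?thesis unfolding qr_def using p poi_nonneg[OF lb_nn[OF x]]
    by (auto intro: mult_nonneg_nonneg)
qed

lemma Qint:
  assumes s': "s \<in> space (prob_algebra M)"
  shows "(\<integral>\<^sup>+x. fps_nth (Q x) i \<partial>s) = ennreal (integral\<^sup>L s (hq i) / fact i)"
proof -
  have s2: "prob_space s" "sets s = sets M" using s' by (auto simp: space_prob_algebra)
  interpret S: prob_space s by (rule s2(1))
  have sps: "space s = space M" using sets_eq_imp_space_eq[OF s2(2)] .
  have hm: "(\<lambda>x. hq i x / fact i) \<in> borel_measurable s"
    using hq_meas s2(2) by (simp cong: measurable_cong_sets)
  have "(\<integral>\<^sup>+x. fps_nth (Q x) i \<partial>s) = (\<integral>\<^sup>+x. ennreal (hq i x / fact i) \<partial>s)"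
    by (intro nn_integral_cong) (simp add: sps Q_nth qr_hq)
  also have "\<dots> = ennreal (integral\<^sup>L s (\<lambda>x. hq i x / fact i))"
  proof (rule nn_integral_eq_integral)
    show "integrable s (\<lambda>x. hq i x / fact i)"
    proof (rule S.integrable_const_bound[where B=1])
      show "AE x in s. norm (hq i x / fact i) \<le> 1"
      proof (intro AE_I2)
        fix x assume "x \<in> space s"
        then have x: "x \<in> space M" by (simp add: sps)
        have "norm (hq i x / fact i) = qr x i"
          using qr_hq[OF x, of i] qr_nonneg[OF x, of i] by (simp only: real_norm_def abs_of_nonneg)
        then show "norm (hq i x / fact i) \<le> 1" using qr_le_1[OF x] by simp
      qed
    qed (rule hm)
    show "AE x in s. 0 \<le> hq i x / fact i"
      using qr_nonneg qr_hq by (intro AE_I2) (auto simp: sps)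
  qed
  finally show ?thesis by simp
qed

lemma hq_int_nonneg:
  assumes s': "s \<in> space (prob_algebra M)"
  shows "0 \<le> integral\<^sup>L s (hq i)"
proof -
  have s2: "sets s = sets M" using s' by (auto simp: space_prob_algebra)
  have sps: "space s = space M" using sets_eq_imp_space_eq[OF s2] .
  have "0 \<le> hq i x" if "x \<in> space M" for x
  proof -
    have "hq i x = qr x i * fact i" using qr_hq[OF that, of i] by simp
    then show ?thesis using qr_nonneg[OF that, of i] by simp
  qed
  then show ?thesis by (intro integral_nonneg_AE AE_I2) (auto simp: sps)
qed

lemma part2_el:
  assumes s': "s \<in> space (prob_algebra M)"
  shows "emeasure (iid_pp M (measure_pmf rho) s \<bind> F) {xs \<in> lists (space M). length xs = n} =
     (\<Sum>m. ennreal (pmf rho m) * ennreal (fps_nth (Abs_fps (\<lambda>i. integral\<^sup>L s (hq i) / fact i) ^ m) n))"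
proof -
  define Phi where "Phi = iid_pp M (measure_pmf rho) s"
  have prev_space: "Phi \<in> space (prob_algebra (listM M))"
    using prob_space_iid[OF s'] by (simp add: Phi_def space_prob_algebra)
  have sp_prev: "space Phi = lists (space M)"
    using sets_eq_imp_space_eq[of Phi "listM M"] by (simp add: Phi_def)
  define c where "c i = integral\<^sup>L s (hq i) / fact i" for i
  have c0: "0 \<le> c i" for i using hq_int_nonneg[OF s'] by (simp add: c_def)
  have Cc: "Abs_fps (\<lambda>i. \<integral>\<^sup>+x. fps_nth (Q x) i \<partial>s) = Abs_fps (\<lambda>i. ennreal (c i))"
    by (simp add: Qint[OF s'] c_def)
  have "emeasure (Phi \<bind> F) {xs \<in> lists (space M). length xs = n} =
        (\<integral>\<^sup>+xs. emeasure (F xs) {xs \<in> lists (space M). length xs = n} \<partial>Phi)"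
    by (rule emeasure_bind_prob_algebra[OF prev_space F_meas len_set_sets])
  also have "\<dots> = (\<integral>\<^sup>+xs. fps_nth (prod_list (map Q xs)) n \<partial>Phi)"
  proof (intro nn_integral_cong)
    fix xs assume "xs \<in> space Phi"
    then have "elf M (F xs) = prod_list (map Q xs)" using elf_F sp_prev by auto
    then show "emeasure (F xs) {xs \<in> lists (space M). length xs = n} = fps_nth (prod_list (map Q xs)) n"
      by (metis elf_def el_def fps_nth_Abs_fps)
  qed
  also have "\<dots> = (\<Sum>m. ennreal (pmf rho m) * fps_nth (Abs_fps (\<lambda>i. \<integral>\<^sup>+x. fps_nth (Q x) i \<partial>s) ^ m) n)"
    unfolding Phi_def by (simp add: nn_integral_iid[OF s' prodQ_meas] nn_integral_prodQ_Lk[OF s'])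
  also have "\<dots> = (\<Sum>m. ennreal (pmf rho m) * ennreal (fps_nth (Abs_fps c ^ m) n))"
    unfolding Cc using fps_pow_ennreal[OF c0] by simp
  moreover have "c = (\<lambda>i. integral\<^sup>L s (hq i) / fact i)" by (simp add: c_def fun_eq_iff)
  ultimately show ?thesis by (simp add: Phi_def)
qed

end


lemma final_real:
  fixes rho :: "nat pmf" and b :: "nat \<Rightarrow> real" and p :: real
  assumes b0: "\<And>i. 0 \<le> b i" and p0: "0 \<le> p"
    and E: "ennreal p = (\<Sum>m. ennreal (pmf rho m) * ennreal (fps_nth (Abs_fps (\<lambda>i. b i / fact i) ^ m) n))"
  shows "p = (\<Sum>j\<le>n. partial_bell n j b *
               (\<Sum>m. if j \<le> m then fact m / (fact n * fact (m - j)) * pmf rho m * b 0 ^ (m - j) else 0))"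
proof -
  define U where "U j m = (if j \<le> m then fact m / (fact n * fact (m - j)) * pmf rho m * b 0 ^ (m - j) else 0)" for j m
  define Pb where "Pb j = partial_bell n j b" for j
  have U0: "0 \<le> U j m" for j m using b0[of 0] by (simp add: U_def)
  have Pb0: "0 \<le> Pb j" for j unfolding Pb_def by (rule partial_bell_nonneg[OF b0])
  have step: "ennreal (pmf rho m) * ennreal (fps_nth (Abs_fps (\<lambda>i. b i / fact i) ^ m) n)
      = (\<Sum>j\<le>n. ennreal (Pb j * U j m))" for m
  proof -
    have eqA: "pmf rho m * fps_nth (Abs_fps (\<lambda>i. b i / fact i) ^ m) n = (\<Sum>j\<le>n. Pb j * U j m)"
      unfolding fps_pow_coeff sum_distrib_left
    proof (intro sum.cong refl)
      fix j
      show "pmf rho m * (partial_bell n j b * (if j \<le> m then fact m / (fact n * fact (m - j)) * b 0 ^ (m - j) else 0)) = Pb j * U j m"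
        unfolding U_def Pb_def by (cases "j \<le> m") (simp_all only: if_True if_False mult_zero_right mult_ac)
    qed
    moreover have nnA: "0 \<le> fps_nth (Abs_fps (\<lambda>i. b i / fact i) ^ m) n"
      using fps_pow_ennreal[of "\<lambda>i. b i / fact i" m n] b0 by simp
    ultimately have "ennreal (pmf rho m) * ennreal (fps_nth (Abs_fps (\<lambda>i. b i / fact i) ^ m) n)
        = ennreal (\<Sum>j\<le>n. Pb j * U j m)"
      by (simp only: ennreal_mult[OF pmf_nonneg, symmetric])
    also have "\<dots> = (\<Sum>j\<le>n. ennreal (Pb j * U j m))"
      by (rule sum_ennreal[symmetric]) (use Pb0 U0 in simp)
    finally show ?thesis .
  qed
  have "ennreal p = (\<Sum>m. \<Sum>j\<le>n. ennreal (Pb j * U j m))"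
    unfolding E step ..
  also have "\<dots> = (\<Sum>j\<le>n. \<Sum>m. ennreal (Pb j * U j m))"
    by (rule suminf_sum) simp
  finally have Ep: "ennreal p = (\<Sum>j\<le>n. \<Sum>m. ennreal (Pb j * U j m))" .
  have per: "(\<Sum>m. ennreal (Pb j * U j m)) = ennreal (Pb j * suminf (U j)) \<and> 0 \<le> Pb j * suminf (U j)"
    if j: "j \<in> {..n}" for j
  proof (cases "Pb j = 0")
    case True then show ?thesis by simp
  next
    case False
    then have pos: "Pb j > 0" using Pb0[of j] by simp
    have eq: "(\<Sum>m. ennreal (Pb j * U j m)) = ennreal (Pb j) * (\<Sum>m. ennreal (U j m))"
      using Pb0 U0 by (simp add: ennreal_mult)
    have "(\<Sum>m. ennreal (Pb j * U j m)) \<le> ennreal p"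
      unfolding Ep by (rule member_le_sum[of j "{..n}" "\<lambda>j. \<Sum>m. ennreal (Pb j * U j m)"]) (use j in auto)
    then have "(\<Sum>m. ennreal (Pb j * U j m)) < top" by (rule le_less_trans) simp
    then have "(\<Sum>m. ennreal (Pb j * U j m)) \<noteq> top" by simp
    then have nt: "(\<Sum>m. ennreal (U j m)) \<noteq> top" using pos unfolding eq by (auto simp: ennreal_mult_eq_top_iff)
    then have sm: "summable (U j)" by (rule summable_suminf_not_top[OF U0])
    have "(\<Sum>m. ennreal (U j m)) = ennreal (suminf (U j))"
      by (rule suminf_ennreal2[OF U0 sm])
    moreover have "0 \<le> suminf (U j)" using sm U0 by (simp add: suminf_nonneg)
    ultimately show ?thesis unfolding eq using Pb0[of j] by (simp add: ennreal_mult)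
  qed
  have "ennreal p = (\<Sum>j\<le>n. ennreal (Pb j * suminf (U j)))"
    unfolding Ep by (intro sum.cong refl) (use per in blast)
  also have "\<dots> = ennreal (\<Sum>j\<le>n. Pb j * suminf (U j))"
    by (rule sum_ennreal) (use per in blast)
  finally have "p = (\<Sum>j\<le>n. Pb j * suminf (U j))"
    using p0 per by (subst (asm) ennreal_inj) (auto intro: sum_nonneg)
  then show ?thesis by (simp add: Pb_def U_def[abs_def])
qed


theorem theorem1:
  fixes X :: "'a::euclidean_space set"
    and rho :: "nat pmf"
    and s :: "'a measure"
    and ps lb :: "'a \<Rightarrow> real"
    and fs sb :: "'a \<Rightarrow> 'a measure"
  defines "M \<equiv> restrict_space borel X"
  defines "Phi_prev \<equiv> iid_pp M (measure_pmf rho) s"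
  defines "Phi_pred \<equiv> predicted_pp M ps fs lb sb Phi_prev"
  defines "b \<equiv> (\<lambda>i::nat. if i = 0
              then integral\<^sup>L s (\<lambda>x. (1 - ps x) * exp (- lb x))
              else integral\<^sup>L s (\<lambda>x. lb x ^ (i - 1) * exp (- lb x)
                                       * ((1 - ps x) * lb x + real i * ps x)))"
  assumes s_prob: "prob_space s" and s_sets: "sets s = sets M"
    and ps_meas: "ps \<in> borel_measurable M" and ps_range: "\<And>x. x \<in> X \<Longrightarrow> 0 \<le> ps x \<and> ps x \<le> 1"
    and fs_kernel: "fs \<in> M \<rightarrow>\<^sub>M prob_algebra M"
    and lb_meas: "lb \<in> borel_measurable M" and lb_nonneg: "\<And>x. x \<in> X \<Longrightarrow> 0 \<le> lb x"
    and sb_kernel: "sb \<in> M \<rightarrow>\<^sub>M prob_algebra M"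
  shows "(\<forall>B \<in> sets M. emeasure (intensity M Phi_pred) B =
            (\<integral>\<^sup>+ x. (ennreal (ps x) * emeasure (fs x) B + ennreal (lb x) * emeasure (sb x) B)
               \<partial>(intensity M Phi_prev)))
       \<and> (\<forall>n. card_dist M Phi_pred n =
            (\<Sum>j\<le>n. partial_bell n j b *
               (\<Sum>m. if j \<le> m then fact m / (fact n * fact (m - j)) * pmf rho m * b 0 ^ (m - j)
                     else 0)))"
proof -
  have spM: "space M = X" by (simp add: M_def space_restrict_space)
  have s': "s \<in> space (prob_algebra M)" using s_prob s_sets by (simp add: space_prob_algebra)
  have ne: "space M \<noteq> {}" by (rule ne_of_prob_algebra[OF s'])
  interpret P: pred_setup M ps lb fs sb
    by unfold_locales (use ps_meas ps_range fs_kernel lb_meas lb_nonneg sb_kernel ne spM in auto)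
  have pred: "Phi_pred = Phi_prev \<bind> P.F" unfolding Phi_pred_def by (rule P.pred_eq)
  have bi: "b i = integral\<^sup>L s (P.hq i)" for i
    by (cases "i = 0") (simp_all add: b_def P.hq_def[abs_def])
  have b_eq: "(\<lambda>i. integral\<^sup>L s (P.hq i) / fact i) = (\<lambda>i. b i / fact i)"
    by (simp add: bi)
  have b0: "0 \<le> b i" for i unfolding bi by (rule P.hq_int_nonneg[OF s'])
  have prev_space: "Phi_prev \<in> space (prob_algebra (listM M))"
    using prob_space_iid[OF s'] by (simp add: Phi_prev_def space_prob_algebra)
  have pp: "prob_space Phi_pred" unfolding pred by (rule prob_space_bind'[OF prev_space P.F_meas])
  show ?thesis
  proof (intro conjI ballI allI)
    fix B assume B: "B \<in> sets M"
    show "emeasure (intensity M Phi_pred) B =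
            (\<integral>\<^sup>+ x. (ennreal (ps x) * emeasure (fs x) B + ennreal (lb x) * emeasure (sb x) B)
               \<partial>(intensity M Phi_prev))"
      using P.part1[OF s' B, of rho] unfolding pred Phi_prev_def P.g_def .
  next
    fix n
    have "ennreal (card_dist M Phi_pred n) = emeasure Phi_pred {xs \<in> lists (space M). length xs = n}"
    proof -
      interpret PP: prob_space Phi_pred by (rule pp)
      show ?thesis unfolding card_dist_def by (rule PP.emeasure_eq_measure[symmetric])
    qed
    also have "\<dots> = (\<Sum>m. ennreal (pmf rho m) * ennreal (fps_nth (Abs_fps (\<lambda>i. b i / fact i) ^ m) n))"
      unfolding pred Phi_prev_def P.part2_el[OF s'] b_eq ..
    finally have E: "ennreal (card_dist M Phi_pred n) = (\<Sum>m. ennreal (pmf rho m) * ennreal (fps_nth (Abs_fps (\<lambda>i. b i / fact i) ^ m) n))" .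
    show "card_dist M Phi_pred n =
            (\<Sum>j\<le>n. partial_bell n j b *
               (\<Sum>m. if j \<le> m then fact m / (fact n * fact (m - j)) * pmf rho m * b 0 ^ (m - j)
                     else 0))"
      by (rule final_real[OF b0 _ E]) (simp add: card_dist_def)
  qed
qed


end
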